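(* Let $\alpha=\frac12$, $\mu>0$, $s>1$, $\theta_0\in H^s$, and let $\theta\in L^\infty([0,T];H^s)$ be the solution of the regularized QG initial value problem given by local existence. Let $T_1>T$. If $\sup\{\|\theta(\cdot,t)\|_1: t<T_1,\ \theta \text{ defined at } t\}<\infty$ (i.e. $\theta\in L^\infty([0,T_1];H^1)$ on its interval of existence), then $\theta$ can be extended to a solution in $L^\infty([0,T_1];H^s)$.
   Context: Setting: $\Omega=[0,2\pi]^2$ with periodic boundary conditions; all functions are periodic with zero mean. For a periodic distribution $f$, $\hat f(k)=(2\pi)^{-2}\int_\Omega f(x)e^{-ik\cdot x}\,dx$, $k\in\mathbb Z^2$. $\Lambda=(-\Delta)^{1/2}$, $\widehat{\Lambda^\beta f}(k)=|k|^\beta\hat f(k)$. Riesz transforms: $\widehat{\mathcal R_j f}(k)=-i\frac{k_j}{|k|}\hat f(k)$, $k\ne0$. $\|f\|_s=(\sum_k|k|^{2s}|\hat f(k)|^2)^{1/2}$, $H^s=\{f:\|f\|_s<\infty\}$. The regularized QG initial value problem (with zero forcing) is $$\theta_t+u\cdot\nabla\theta+\mu(-\Delta)^\alpha\theta_t=0,\quad u=(-\mathcal R_2\theta,\mathcal R_1\theta),\quad\theta(x,0)=\theta_0(x),$$ with $\mu>0$. A solution on $[0,T]$ in $L^\infty([0,T];H^s)$ means $\theta\in L^\infty([0,T];H^s)$ satisfying $\theta(t)=\theta_0-\int_0^t(1+\mu\Lambda^{2\alpha})^{-1}\nabla\cdot(u\theta)(\tau)\,d\tau$. For $\alpha\ge\frac12$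 and $s>1$ such a solution exists and is unique on a short time interval. *)

theory Defs
  imports "HOL-Analysis.Analysis"
begin

text \<open>Periodic functions on [0,2pi]^2 are represented by their Fourier coefficients
  f :: int \<times> int \<Rightarrow> complex.\<close>

definition knorm :: "int \<times> int \<Rightarrow> real" where
  "knorm k = sqrt ((real_of_int (fst k))\<^sup>2 + (real_of_int (snd k))\<^sup>2)"

text \<open>Membership in H^s: zero mean, real-valued (Hermitian symmetric coefficients),
  finite H^s norm.\<close>
definition in_H :: "real \<Rightarrow> (int \<times> int \<Rightarrow> complex) \<Rightarrow> bool" where
  "in_H s f \<longleftrightarrow> f (0, 0) = 0 \<and> (\<forall>k. f (- fst k, - snd k) = cnj (f k)) \<and>
     (\<lambda>k. knorm k powr (2 * s) * (cmod (f k))\<^sup>2) summable_on UNIV"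

definition Hnorm :: "real \<Rightarrow> (int \<times> int \<Rightarrow> complex) \<Rightarrow> real" where
  "Hnorm s f = sqrt (\<Sum>\<^sub>\<infinity>k. knorm k powr (2 * s) * (cmod (f k))\<^sup>2)"

text \<open>Fourier coefficients of u = (-R_2 theta, R_1 theta), where R_j has symbol -i k_j/|k|.\<close>
definition vel :: "(int \<times> int \<Rightarrow> complex) \<Rightarrow> int \<times> int \<Rightarrow> complex \<times> complex" where
  "vel f k = (if k = (0, 0) then (0, 0) else
     (\<i> * of_int (snd k) / of_real (knorm k) * f k,
      - \<i> * of_int (fst k) / of_real (knorm k) * f k))"

text \<open>Fourier coefficient at k of div(u theta): i k . (u-hat * theta-hat)(k).\<close>
definition flux_div :: "(int \<times> int \<Rightarrow> complex) \<Rightarrow> int \<times> int \<Rightarrow> complex" where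
  "flux_div f k = \<i> * (of_int (fst k) * (\<Sum>\<^sub>\<infinity>j. fst (vel f j) * f (fst k - fst j, snd k - snd j))
                   + of_int (snd k) * (\<Sum>\<^sub>\<infinity>j. snd (vel f j) * f (fst k - fst j, snd k - snd j)))"

text \<open>theta is a solution on [0,T] in L^infty([0,T];H^s) of the regularized QG problem:
  theta(t) = theta_0 - int_0^t (1 + mu Lambda^{2 alpha})^{-1} div(u theta)(tau) dtau.\<close>
definition rQG_solution ::
  "real \<Rightarrow> real \<Rightarrow> real \<Rightarrow> (int \<times> int \<Rightarrow> complex) \<Rightarrow> real \<Rightarrow> (real \<Rightarrow> int \<times> int \<Rightarrow> complex) \<Rightarrow> bool" where
  "rQG_solution \<alpha> \<mu> s \<theta>0 T \<theta> \<longleftrightarrow>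
     (\<exists>B. \<forall>t\<in>{0..T}. in_H s (\<theta> t) \<and> Hnorm s (\<theta> t) \<le> B) \<and>
     (\<forall>t\<in>{0..T}. \<forall>k.
        (\<lambda>\<tau>. flux_div (\<theta> \<tau>) k / of_real (1 + \<mu> * knorm k powr (2 * \<alpha>))) integrable_on {0..t} \<and>
        \<theta> t k = \<theta>0 k - integral {0..t} (\<lambda>\<tau>. flux_div (\<theta> \<tau>) k / of_real (1 + \<mu> * knorm k powr (2 * \<alpha>))))"

end

theory Submission
  imports Defs
begin


definition bd :: "real \<Rightarrow> (int \<times> int \<Rightarrow> complex) \<Rightarrow> real \<Rightarrow> bool" where
  "bd s f c \<longleftrightarrow> (\<forall>A. finite A \<longrightarrow> L2_set (\<lambda>k. knorm k powr s * cmod (f k)) A \<le> c)"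

definition l1 :: "(int \<times> int \<Rightarrow> complex) \<Rightarrow> real \<Rightarrow> bool" where
  "l1 f c \<longleftrightarrow> (\<forall>A. finite A \<longrightarrow> (\<Sum>k\<in>A. cmod (f k)) \<le> c)"

lemma knorm_nonneg[simp]: "0 \<le> knorm k" by (simp add: knorm_def)

lemma knorm_sq: "(knorm k)\<^sup>2 = (real_of_int (fst k))\<^sup>2 + (real_of_int (snd k))\<^sup>2"
  by (simp add: knorm_def)

lemma knorm_ge1: assumes "k \<noteq> (0,0)" shows "1 \<le> knorm k"
proof -
  obtain a b where k: "k = (a,b)" by fastforce
  have "a \<noteq> 0 \<or> b \<noteq> 0" using assms k by auto
  hence "1 \<le> (real_of_int a)\<^sup>2 + (real_of_int b)\<^sup>2"
  proof
    assume "a \<noteq> 0" hence "1 \<le> \<bar>a\<bar>" by auto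
    hence "1 \<le> (real_of_int a)\<^sup>2"
      by (smt (verit) of_int_1_le_iff of_int_power power2_less_eq_zero_iff)
    thus ?thesis by (smt (verit) zero_le_power2)
  next
    assume "b \<noteq> 0" hence "1 \<le> \<bar>b\<bar>" by auto
    hence "1 \<le> (real_of_int b)\<^sup>2"
      by (smt (verit) of_int_1_le_iff of_int_power power2_less_eq_zero_iff)
    thus ?thesis by (smt (verit) zero_le_power2)
  qed
  thus ?thesis by (simp add: knorm_def k)
qed

lemma knorm_pos: assumes "k \<noteq> (0,0)" shows "0 < knorm k"
  using knorm_ge1[OF assms] by linarith

lemma knorm_zero[simp]: "knorm (0,0) = 0" by (simp add: knorm_def)

lemma knorm_minus[simp]: "knorm (- a, - b) = knorm (a, b)"
  by (simp add: knorm_def)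

lemma abs_fst_le_knorm: "\<bar>real_of_int (fst k)\<bar> \<le> knorm k"
proof -
  have "sqrt ((real_of_int (fst k))\<^sup>2) \<le> knorm k" unfolding knorm_def by (intro real_sqrt_le_mono) simp
  thus ?thesis by simp
qed

lemma abs_snd_le_knorm: "\<bar>real_of_int (snd k)\<bar> \<le> knorm k"
proof -
  have "sqrt ((real_of_int (snd k))\<^sup>2) \<le> knorm k" unfolding knorm_def by (intro real_sqrt_le_mono) simp
  thus ?thesis by simp
qed

lemma knorm_triangle: "knorm (a + c, b + d) \<le> knorm (a, b) + knorm (c, d)"
  unfolding knorm_def using real_sqrt_sum_squares_triangle_ineq[of "real_of_int a" "real_of_int c" "real_of_int b" "real_of_int d"]
  by simp

lemma powr_sq: fixes x s :: real shows "(x powr s)\<^sup>2 = x powr (2 * s)"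
proof -
  have "x powr (2 * s) = x powr (s + s)" by (rule arg_cong[where f="\<lambda>t. x powr t"]) simp
  also have "\<dots> = x powr s * x powr s" by (rule powr_add)
  finally show ?thesis by (simp only: power2_eq_square)
qed

lemma bd_nonneg: "bd s f c \<Longrightarrow> 0 \<le> c"
  unfolding bd_def by (metis L2_set_empty finite.emptyI)

lemma bd_mono: "bd s f c \<Longrightarrow> c \<le> c' \<Longrightarrow> bd s f c'"
  unfolding bd_def by force

lemma bd_add: assumes "bd s f a" "bd s g b" shows "bd s (\<lambda>k. f k + g k) (a + b)"
  unfolding bd_def
proof (intro allI impI)
  fix A :: "(int \<times> int) set" assume A: "finite A"
  have "L2_set (\<lambda>k. knorm k powr s * cmod (f k + g k)) A
     \<le> L2_set (\<lambda>k. knorm k powr s * cmod (f k) + knorm k powr s * cmod (g k)) A"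
    by (rule L2_set_mono) (auto simp: norm_triangle_ineq distrib_left[symmetric] mult_left_mono)
  also have "\<dots> \<le> L2_set (\<lambda>k. knorm k powr s * cmod (f k)) A + L2_set (\<lambda>k. knorm k powr s * cmod (g k)) A"
    by (rule L2_set_triangle_ineq)
  also have "\<dots> \<le> a + b" using assms A unfolding bd_def by (meson add_mono)
  finally show "L2_set (\<lambda>k. knorm k powr s * cmod (f k + g k)) A \<le> a + b" .
qed

lemma bd_scale: assumes "bd s f a" shows "bd s (\<lambda>k. c * f k) (cmod c * a)"
  unfolding bd_def
proof (intro allI impI)
  fix A :: "(int \<times> int) set" assume A: "finite A"
  have "L2_set (\<lambda>k. knorm k powr s * cmod (c * f k)) A = L2_set (\<lambda>k. cmod c * (knorm k powr s * cmod (f k))) A"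
    by (simp add: norm_mult algebra_simps)
  also have "\<dots> = cmod c * L2_set (\<lambda>k. knorm k powr s * cmod (f k)) A"
    by (simp add: L2_set_right_distrib)
  also have "\<dots> \<le> cmod c * a" using assms A unfolding bd_def by (simp add: mult_left_mono)
  finally show "L2_set (\<lambda>k. knorm k powr s * cmod (c * f k)) A \<le> cmod c * a" .
qed

lemma bd_cong: "bd s f a \<Longrightarrow> (\<And>k. cmod (g k) = cmod (f k)) \<Longrightarrow> bd s g a"
  unfolding bd_def by simp

lemma bd_uminus: "bd s f a \<Longrightarrow> bd s (\<lambda>k. - f k) a"
  by (erule bd_cong) simp

lemma bd_diff: assumes "bd s f a" "bd s g b" shows "bd s (\<lambda>k. f k - g k) (a + b)"
  using bd_add[OF assms(1) bd_uminus[OF assms(2)]] by simp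

lemma bd_zero: "bd s (\<lambda>k. 0) 0"
  unfolding bd_def L2_set_def by simp

lemma bd_point: assumes "bd s f c" "finite A" shows "(\<Sum>k\<in>A. (knorm k powr s * cmod (f k))\<^sup>2) \<le> c\<^sup>2"
proof -
  have "L2_set (\<lambda>k. knorm k powr s * cmod (f k)) A \<le> c" using assms unfolding bd_def by auto
  hence le: "sqrt (\<Sum>k\<in>A. (knorm k powr s * cmod (f k))\<^sup>2) \<le> c" by (simp add: L2_set_def)
  have nn: "0 \<le> (\<Sum>k\<in>A. (knorm k powr s * cmod (f k))\<^sup>2)" by (intro sum_nonneg) simp
  have "(\<Sum>k\<in>A. (knorm k powr s * cmod (f k))\<^sup>2) = (sqrt (\<Sum>k\<in>A. (knorm k powr s * cmod (f k))\<^sup>2))\<^sup>2"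
    using nn by simp
  also have "\<dots> \<le> c\<^sup>2" by (rule power_mono[OF le]) (use nn in simp)
  finally show ?thesis .
qed

lemma bd_coeff: assumes "bd s f c" "0 \<le> s" "k \<noteq> (0,0)" shows "cmod (f k) \<le> c"
proof -
  have "L2_set (\<lambda>k. knorm k powr s * cmod (f k)) {k} \<le> c" using assms unfolding bd_def by auto
  hence "knorm k powr s * cmod (f k) \<le> c" by simp
  moreover have "1 \<le> knorm k powr s" using knorm_ge1[OF assms(3)] assms(2) by (simp add: ge_one_powr_ge_zero)
  ultimately show ?thesis using mult_right_mono[of 1 "knorm k powr s" "cmod (f k)"] by simp
qed

lemma bd_coeff0: assumes "bd s f c" "0 \<le> s" "f (0,0) = 0" shows "cmod (f k) \<le> c"
  using bd_coeff[OF assms(1,2)] assms(3) bd_nonneg[OF assms(1)] by (cases "k = (0,0)") auto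

lemma bd_limit:
  assumes lim: "\<And>k. (\<lambda>n. x n k) \<longlonglongrightarrow> y k" and ev: "\<forall>\<^sub>F n in sequentially. bd s (x n) c"
  shows "bd s y c"
  unfolding bd_def
proof (intro allI impI)
  fix A :: "(int \<times> int) set" assume A: "finite A"
  have "(\<lambda>n. L2_set (\<lambda>k. knorm k powr s * cmod (x n k)) A) \<longlonglongrightarrow> L2_set (\<lambda>k. knorm k powr s * cmod (y k)) A"
    unfolding L2_set_def
    by (intro tendsto_intros lim)
  moreover have "\<forall>\<^sub>F n in sequentially. L2_set (\<lambda>k. knorm k powr s * cmod (x n k)) A \<le> c"
    using ev by eventually_elim (use A in \<open>auto simp: bd_def\<close>)
  ultimately show "L2_set (\<lambda>k. knorm k powr s * cmod (y k)) A \<le> c"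
    by (rule tendsto_upperbound) simp
qed

lemma bd_of_summable:
  assumes "(\<lambda>k. knorm k powr (2 * s) * (cmod (f k))\<^sup>2) summable_on UNIV"
  shows "bd s f (Hnorm s f)"
  unfolding bd_def
proof (intro allI impI)
  fix A :: "(int \<times> int) set" assume A: "finite A"
  have "(\<Sum>k\<in>A. (knorm k powr s * cmod (f k))\<^sup>2) = (\<Sum>k\<in>A. knorm k powr (2 * s) * (cmod (f k))\<^sup>2)"
    by (simp add: power_mult_distrib powr_sq)
  also have "\<dots> \<le> (\<Sum>\<^sub>\<infinity>k. knorm k powr (2 * s) * (cmod (f k))\<^sup>2)"
    by (rule finite_sum_le_infsum[OF assms A]) auto
  finally show "L2_set (\<lambda>k. knorm k powr s * cmod (f k)) A \<le> Hnorm s f"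
    unfolding L2_set_def Hnorm_def by (rule real_sqrt_le_mono)
qed

lemma bd_summable:
  assumes "bd s f c"
  shows "(\<lambda>k. knorm k powr (2 * s) * (cmod (f k))\<^sup>2) summable_on UNIV"
    and "Hnorm s f \<le> c"
proof -
  have fin: "(\<Sum>k\<in>F. knorm k powr (2 * s) * (cmod (f k))\<^sup>2) \<le> c\<^sup>2" if "finite F" for F
    using bd_point[OF assms that] by (simp add: power_mult_distrib powr_sq)
  show sm: "(\<lambda>k. knorm k powr (2 * s) * (cmod (f k))\<^sup>2) summable_on UNIV"
    by (rule nonneg_bdd_above_summable_on) (auto intro!: bdd_aboveI[where M="c\<^sup>2"] fin)
  have "(\<Sum>\<^sub>\<infinity>k. knorm k powr (2 * s) * (cmod (f k))\<^sup>2) \<le> c\<^sup>2"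
    by (rule infsum_le_finite_sums[OF sm]) (simp add: fin)
  thus "Hnorm s f \<le> c" unfolding Hnorm_def using bd_nonneg[OF assms]
    by (simp add: real_sqrt_le_iff real_le_lsqrt)
qed

lemma inH_bd: "in_H s f \<Longrightarrow> bd s f (Hnorm s f)"
  unfolding in_H_def by (auto intro: bd_of_summable)

lemma inH_summable_lower:
  assumes "in_H s f" "1 \<le> s"
  shows "(\<lambda>k. knorm k powr (2 * 1) * (cmod (f k))\<^sup>2) summable_on UNIV"
proof (rule summable_on_comparison_test)
  show "(\<lambda>k. knorm k powr (2 * s) * (cmod (f k))\<^sup>2) summable_on UNIV" using assms unfolding in_H_def by auto
  fix k :: "int \<times> int"
  show "knorm k powr (2 * 1) * (cmod (f k))\<^sup>2 \<le> knorm k powr (2 * s) * (cmod (f k))\<^sup>2"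
  proof (cases "k = (0,0)")
    case True thus ?thesis by simp
  next
    case False
    hence "knorm k powr (2*1) \<le> knorm k powr (2 * s)" using knorm_ge1[OF False] assms(2)
      by (intro powr_mono) auto
    thus ?thesis by (simp add: mult_right_mono)
  qed
qed simp

lemma inH_bd1: "in_H s f \<Longrightarrow> 1 \<le> s \<Longrightarrow> bd 1 f (Hnorm 1 f)"
  using bd_of_summable[OF inH_summable_lower] by blast


lemma int_abs_ge1: "(a::int) \<noteq> 0 \<Longrightarrow> 1 \<le> \<bar>real_of_int a\<bar>"
  by (metis of_int_1_le_iff of_int_abs zero_less_abs_iff int_one_le_iff_zero_less)

lemma rho_le: assumes "k \<noteq> (0,0)"
  shows "(1 + \<bar>real_of_int (fst k)\<bar>) * (1 + \<bar>real_of_int (snd k)\<bar>) \<le> 4 * (knorm k)\<^sup>2"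
proof -
  define a where "a = \<bar>real_of_int (fst k)\<bar>"
  define b where "b = \<bar>real_of_int (snd k)\<bar>"
  define m where "m = max a b"
  have "fst k \<noteq> 0 \<or> snd k \<noteq> 0" using assms by (cases k) auto
  hence m1: "1 \<le> m" using int_abs_ge1 unfolding m_def a_def b_def by fastforce
  have a0: "0 \<le> a" "0 \<le> b" by (auto simp: a_def b_def)
  have "(1 + a) * (1 + b) \<le> (1 + m) * (1 + m)"
    using a0 by (intro mult_mono) (auto simp: m_def)
  also have "\<dots> \<le> (2 * m) * (2 * m)" using m1 by (intro mult_mono) auto
  also have "\<dots> = 4 * m\<^sup>2" by (simp add: power2_eq_square)
  also have "m\<^sup>2 \<le> (knorm k)\<^sup>2"
  proof -
    have "m\<^sup>2 \<le> a\<^sup>2 + b\<^sup>2" unfolding m_def by (cases "a \<le> b") (auto simp: max_def)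
    also have "\<dots> = (knorm k)\<^sup>2" by (simp add: knorm_sq a_def b_def)
    finally show ?thesis .
  qed
  finally show ?thesis unfolding a_def b_def by simp
qed

lemma zsum_fin: assumes "1 < r"
  obtains S where "0 \<le> S" "\<And>F. finite F \<Longrightarrow> (\<Sum>a\<in>F. (1 + \<bar>real_of_int a\<bar>) powr (-r)) \<le> S"
proof -
  define g where "g n = (1 + real n) powr (-r)" for n :: nat
  have sg: "summable g"
  proof -
    have "summable (\<lambda>n. real n powr (-r))" using assms by (simp add: summable_real_powr_iff)
    hence "summable (\<lambda>n. real (Suc n) powr (-r))" by (subst summable_Suc_iff)
    thus ?thesis unfolding g_def by (simp add: add.commute)
  qed
  have gnn: "0 \<le> g n" for n by (simp add: g_def)
  have part: "(\<Sum>a\<in>F. (1 + \<bar>real_of_int a\<bar>) powr (-r)) \<le> suminf g"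
    if F: "finite F" "inj_on (\<lambda>a. nat \<bar>a\<bar>) F" for F :: "int set"
  proof -
    have "(\<Sum>a\<in>F. (1 + \<bar>real_of_int a\<bar>) powr (-r)) = (\<Sum>a\<in>F. g (nat \<bar>a\<bar>))"
      by (intro sum.cong) (auto simp: g_def)
    also have "\<dots> = sum g ((\<lambda>a. nat \<bar>a\<bar>) ` F)" by (rule sum.reindex[OF F(2), symmetric, unfolded o_def])
    also have "\<dots> \<le> suminf g" by (rule sum_le_suminf[OF sg]) (use F gnn in auto)
    finally show ?thesis .
  qed
  show ?thesis
  proof (rule that[of "2 * suminf g"])
    show "0 \<le> 2 * suminf g" using suminf_nonneg[OF sg gnn] by simp
    fix F :: "int set" assume F: "finite F"
    let ?F1 = "{a\<in>F. 0 \<le> a}" and ?F2 = "{a\<in>F. a < 0}"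
    have "F = ?F1 \<union> ?F2" by auto
    hence "(\<Sum>a\<in>F. (1 + \<bar>real_of_int a\<bar>) powr (-r)) = (\<Sum>a\<in>?F1. (1 + \<bar>real_of_int a\<bar>) powr (-r)) + (\<Sum>a\<in>?F2. (1 + \<bar>real_of_int a\<bar>) powr (-r))"
      using F by (metis (no_types, lifting) sum.union_disjoint finite_Un disjoint_iff mem_Collect_eq not_le)
    also have "\<dots> \<le> suminf g + suminf g"
      by (intro add_mono part) (use F in \<open>auto simp: inj_on_def\<close>)
    finally show "(\<Sum>a\<in>F. (1 + \<bar>real_of_int a\<bar>) powr (-r)) \<le> 2 * suminf g" by simp
  qed
qed

lemma rho_sum_fin: assumes "1 < r"
  obtains S where "0 \<le> S" "\<And>F. finite F \<Longrightarrow>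
    (\<Sum>k\<in>F. ((1 + \<bar>real_of_int (fst k)\<bar>) * (1 + \<bar>real_of_int (snd k)\<bar>)) powr (-r)) \<le> S"
proof -
  obtain S1 where S1: "0 \<le> S1" "\<And>F. finite F \<Longrightarrow> (\<Sum>a\<in>F. (1 + \<bar>real_of_int a\<bar>) powr (-r)) \<le> S1"
    using zsum_fin[OF assms] by blast
  define h where "h a = (1 + \<bar>real_of_int a\<bar>) powr (-r)" for a :: int
  show ?thesis
  proof (rule that[of "S1 * S1"])
    show "0 \<le> S1 * S1" using S1 by simp
    fix F :: "(int \<times> int) set" assume F: "finite F"
    have "(\<Sum>k\<in>F. ((1 + \<bar>real_of_int (fst k)\<bar>) * (1 + \<bar>real_of_int (snd k)\<bar>)) powr (-r))
        = (\<Sum>k\<in>F. h (fst k) * h (snd k))"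
      by (intro sum.cong) (auto simp: h_def powr_mult)
    also have "\<dots> \<le> (\<Sum>k\<in>fst ` F \<times> snd ` F. h (fst k) * h (snd k))"
      by (rule sum_mono2) (use F in \<open>auto simp: h_def intro: rev_image_eqI\<close>)
    also have "\<dots> = (\<Sum>a\<in>fst ` F. h a) * (\<Sum>b\<in>snd ` F. h b)"
      by (simp add: sum_product sum.cartesian_product case_prod_beta)
    also have "\<dots> \<le> S1 * S1"
      by (intro mult_mono S1(2)) (use F S1 in \<open>auto simp: h_def intro: sum_nonneg\<close>)
    finally show "(\<Sum>k\<in>F. ((1 + \<bar>real_of_int (fst k)\<bar>) * (1 + \<bar>real_of_int (snd k)\<bar>)) powr (-r)) \<le> S1 * S1" .
  qed
qed

lemma knorm_powr_le: assumes "k \<noteq> (0,0)" "0 \<le> r"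
  shows "knorm k powr (-(2*r)) \<le> 4 powr r * ((1 + \<bar>real_of_int (fst k)\<bar>) * (1 + \<bar>real_of_int (snd k)\<bar>)) powr (-r)"
proof -
  define \<rho> where "\<rho> = (1 + \<bar>real_of_int (fst k)\<bar>) * (1 + \<bar>real_of_int (snd k)\<bar>)"
  have kp: "0 < knorm k" using knorm_pos[OF assms(1)] .
  have rp: "0 < \<rho>" by (simp add: \<rho>_def add_pos_nonneg)
  have e: "knorm k powr 2 = (knorm k)\<^sup>2" using kp by simp
  have "knorm k powr (-(2*r)) = ((knorm k)\<^sup>2) powr (-r)" unfolding e[symmetric] powr_powr by simp
  also have "((knorm k)\<^sup>2) powr (-r) \<le> (\<rho> / 4) powr (-r)"
    by (rule powr_mono2') (use assms(2) rp rho_le[OF assms(1)] in \<open>auto simp: \<rho>_def\<close>)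
  also have "(\<rho> / 4) powr (-r) = 4 powr r * \<rho> powr (-r)"
    using rp by (simp add: powr_divide powr_minus divide_simps)
  finally show ?thesis unfolding \<rho>_def .
qed

lemma Ksum: assumes "1 < r"
  obtains Z where "0 \<le> Z" "\<And>A. finite A \<Longrightarrow> (\<Sum>k\<in>A-{(0,0)}. knorm k powr (-(2*r))) \<le> Z"
proof -
  obtain S where S: "0 \<le> S" "\<And>F. finite F \<Longrightarrow>
    (\<Sum>k\<in>F. ((1 + \<bar>real_of_int (fst k)\<bar>) * (1 + \<bar>real_of_int (snd k)\<bar>)) powr (-r)) \<le> S"
    using rho_sum_fin[OF assms] by blast
  show ?thesis
  proof (rule that[of "4 powr r * S"])
    show "0 \<le> 4 powr r * S" using S by simp
    fix A :: "(int \<times> int) set" assume A: "finite A"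
    have "(\<Sum>k\<in>A-{(0,0)}. knorm k powr (-(2*r)))
      \<le> (\<Sum>k\<in>A-{(0,0)}. 4 powr r * ((1 + \<bar>real_of_int (fst k)\<bar>) * (1 + \<bar>real_of_int (snd k)\<bar>)) powr (-r))"
      by (intro sum_mono knorm_powr_le) (use assms in auto)
    also have "\<dots> = 4 powr r * (\<Sum>k\<in>A-{(0,0)}. ((1 + \<bar>real_of_int (fst k)\<bar>) * (1 + \<bar>real_of_int (snd k)\<bar>)) powr (-r))"
      by (simp add: sum_distrib_left)
    also have "\<dots> \<le> 4 powr r * S" using S(2)[of "A-{(0,0)}"] A by (intro mult_left_mono) auto
    finally show "(\<Sum>k\<in>A-{(0,0)}. knorm k powr (-(2*r))) \<le> 4 powr r * S" .
  qed
qed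

lemma hsum: "(\<Sum>a\<in>{-int N..int N}. 1 / (1 + \<bar>real_of_int a\<bar>)) \<le> 1 + 2 * ln (real N + 1)"
proof (induction N)
  case 0 thus ?case by simp
next
  case (Suc N)
  have eq: "{-int (Suc N)..int (Suc N)} = insert (int (Suc N)) (insert (- int (Suc N)) {-int N..int N})" by auto
  have l: "1 / (real N + 2) \<le> ln (real N + 2) - ln (real N + 1)"
  proof -
    have "ln ((real N + 1) / (real N + 2)) \<le> (real N + 1) / (real N + 2) - 1" by (rule ln_le_minus_one) simp
    also have "\<dots> = - (1 / (real N + 2))" by (simp add: field_simps)
    finally show ?thesis by (simp add: ln_div)
  qed
  have "(\<Sum>a\<in>{-int (Suc N)..int (Suc N)}. 1 / (1 + \<bar>real_of_int a\<bar>))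
      = 1 / (real N + 2) + 1 / (real N + 2) + (\<Sum>a\<in>{-int N..int N}. 1 / (1 + \<bar>real_of_int a\<bar>))"
    unfolding eq by (simp add: add_ac)
  also have "\<dots> \<le> 2 * (ln (real N + 2) - ln (real N + 1)) + (1 + 2 * ln (real N + 1))"
    using add_mono[OF add_mono[OF l l] Suc.IH] by simp
  finally show ?case by (simp add: add_ac)
qed


lemma head_bound:
  assumes H: "finite H" "\<And>k. k \<in> H \<Longrightarrow> k \<noteq> (0,0) \<and> knorm k \<le> real N"
  shows "(\<Sum>k\<in>H. (1 / knorm k)\<^sup>2) \<le> 4 * (1 + 2 * ln (real N + 1))\<^sup>2"
proof -
  define h where "h a = 1 / (1 + \<bar>real_of_int a\<bar>)" for a :: int
  define B where "B = {-int N..int N} \<times> {-int N..int N}"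
  have "(\<Sum>k\<in>H. (1 / knorm k)\<^sup>2) \<le> (\<Sum>k\<in>H. 4 * (h (fst k) * h (snd k)))"
  proof (rule sum_mono)
    fix k assume k: "k \<in> H"
    have k0: "k \<noteq> (0,0)" using H(2)[OF k] by auto
    have kp: "0 < knorm k" by (rule knorm_pos[OF k0])
    have rp: "0 < (1 + \<bar>real_of_int (fst k)\<bar>) * (1 + \<bar>real_of_int (snd k)\<bar>)" by (simp add: add_pos_nonneg)
    have "(1 / knorm k)\<^sup>2 = 1 / (knorm k)\<^sup>2" by (simp add: power_divide)
    also have "\<dots> \<le> 4 / ((1 + \<bar>real_of_int (fst k)\<bar>) * (1 + \<bar>real_of_int (snd k)\<bar>))"
      using rho_le[OF k0] kp rp by (simp add: divide_simps)
    finally show "(1 / knorm k)\<^sup>2 \<le> 4 * (h (fst k) * h (snd k))" by (simp add: h_def)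
  qed
  also have "\<dots> \<le> (\<Sum>k\<in>B. 4 * (h (fst k) * h (snd k)))"
  proof (rule sum_mono2)
    show "finite B" by (simp add: B_def)
    show "H \<subseteq> B"
    proof
      fix k assume k: "k \<in> H"
      have "\<bar>real_of_int (fst k)\<bar> \<le> real N" "\<bar>real_of_int (snd k)\<bar> \<le> real N"
        using abs_fst_le_knorm[of k] abs_snd_le_knorm[of k] H(2)[OF k] by auto
      hence "\<bar>fst k\<bar> \<le> int N" "\<bar>snd k\<bar> \<le> int N" by linarith+
      thus "k \<in> B" unfolding B_def by (cases k) auto
    qed
  qed (auto simp: h_def)
  also have "\<dots> = 4 * (\<Sum>k\<in>B. h (fst k) * h (snd k))" by (simp add: sum_distrib_left)
  also have "(\<Sum>k\<in>B. h (fst k) * h (snd k)) = (\<Sum>a\<in>{-int N..int N}. h a) * (\<Sum>b\<in>{-int N..int N}. h b)"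
    by (simp add: B_def sum_product sum.cartesian_product case_prod_beta)
  finally have 1: "(\<Sum>k\<in>H. (1 / knorm k)\<^sup>2) \<le> 4 * ((\<Sum>a\<in>{-int N..int N}. h a) * (\<Sum>a\<in>{-int N..int N}. h a))" .
  have SL: "(\<Sum>a\<in>{-int N..int N}. h a) \<le> 1 + 2 * ln (real N + 1)" using hsum[of N] by (simp add: h_def)
  have S0: "0 \<le> (\<Sum>a\<in>{-int N..int N}. h a)" by (auto simp: h_def intro!: sum_nonneg)
  have "(\<Sum>a\<in>{-int N..int N}. h a) * (\<Sum>a\<in>{-int N..int N}. h a) \<le> (1 + 2 * ln (real N + 1)) * (1 + 2 * ln (real N + 1))"
    by (rule mult_mono[OF SL SL]) (use S0 SL in auto)
  with 1 have "(\<Sum>k\<in>H. (1 / knorm k)\<^sup>2) \<le> 4 * ((1 + 2 * ln (real N + 1)) * (1 + 2 * ln (real N + 1)))" by linarith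
  thus ?thesis by (simp add: power2_eq_square)
qed

lemma sum_zero_mean: "f (0,0) = 0 \<Longrightarrow> (\<Sum>k\<in>A. cmod (f k)) = (\<Sum>k\<in>A-{(0,0)}. cmod (f k))"
  by (cases "finite A") (auto intro: sum.mono_neutral_right)

lemma powr_cancel_knorm: "k \<noteq> (0,0) \<Longrightarrow> knorm k powr (-s) * (knorm k powr s * x) = x"
  using knorm_pos[of k] by (simp add: powr_minus field_simps)

lemma tail_CS:
  assumes "bd s f b" "finite T" "(0,0) \<notin> T"
  shows "(\<Sum>k\<in>T. cmod (f k)) \<le> sqrt (\<Sum>k\<in>T. knorm k powr (-(2 * s))) * b"
proof -
  have "(\<Sum>k\<in>T. cmod (f k)) = (\<Sum>k\<in>T. \<bar>knorm k powr (-s)\<bar> * \<bar>knorm k powr s * cmod (f k)\<bar>)"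
  proof (rule sum.cong[OF refl])
    fix k assume "k \<in> T"
    hence k0: "k \<noteq> (0,0)" using assms(3) by auto
    have "\<bar>knorm k powr (-s)\<bar> * \<bar>knorm k powr s * cmod (f k)\<bar> = knorm k powr (-s) * (knorm k powr s * cmod (f k))"
      by (simp add: abs_mult)
    also have "\<dots> = cmod (f k)" by (rule powr_cancel_knorm[OF k0])
    finally show "cmod (f k) = \<bar>knorm k powr (-s)\<bar> * \<bar>knorm k powr s * cmod (f k)\<bar>" by simp
  qed
  also have "\<dots> \<le> L2_set (\<lambda>k. knorm k powr (-s)) T * L2_set (\<lambda>k. knorm k powr s * cmod (f k)) T"
    by (rule L2_set_mult_ineq)
  also have "\<dots> \<le> L2_set (\<lambda>k. knorm k powr (-s)) T * b"
    using assms unfolding bd_def by (intro mult_left_mono) auto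
  also have "L2_set (\<lambda>k. knorm k powr (-s)) T = sqrt (\<Sum>k\<in>T. knorm k powr (-(2 * s)))"
    unfolding L2_set_def by (simp add: powr_sq)
  finally show ?thesis .
qed

lemma l1_of_bd: assumes "1 < s"
  obtains K where "0 < K" "\<And>f b. bd s f b \<Longrightarrow> f (0,0) = 0 \<Longrightarrow> l1 f (K * b)"
proof -
  obtain Z where Z: "0 \<le> Z" "\<And>A. finite A \<Longrightarrow> (\<Sum>k\<in>A-{(0,0)}. knorm k powr (-(2 * s))) \<le> Z"
    using Ksum[OF assms] by blast
  show ?thesis
  proof (rule that[of "sqrt Z + 1"])
    have "0 \<le> sqrt Z" using Z(1) by simp
    thus "0 < sqrt Z + 1" by linarith
    fix f b assume fb: "bd s f b" "f (0,0) = 0"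
    have b0: "0 \<le> b" using bd_nonneg[OF fb(1)] .
    show "l1 f ((sqrt Z + 1) * b)" unfolding l1_def
    proof (intro allI impI)
      fix A :: "(int \<times> int) set" assume A: "finite A"
      have "(\<Sum>k\<in>A. cmod (f k)) = (\<Sum>k\<in>A-{(0,0)}. cmod (f k))" using sum_zero_mean[of f A] fb(2) by simp
      also have "\<dots> \<le> sqrt (\<Sum>k\<in>A-{(0,0)}. knorm k powr (-(2 * s))) * b"
        by (rule tail_CS[OF fb(1)]) (use A in auto)
      also have "\<dots> \<le> sqrt Z * b" using Z(2)[OF A] b0 by (intro mult_right_mono) auto
      also have "\<dots> \<le> (sqrt Z + 1) * b" using b0 by (simp add: algebra_simps)
      finally show "(\<Sum>k\<in>A. cmod (f k)) \<le> (sqrt Z + 1) * b" .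
    qed
  qed
qed


lemma l1_BG: assumes s1: "1 < s"
  obtains c0 c1 where "0 < c0" "0 < c1"
    "\<And>f M b. f (0,0) = 0 \<Longrightarrow> bd 1 f M \<Longrightarrow> bd s f b \<Longrightarrow> l1 f ((1 + M) * (c0 + c1 * ln (1 + b)))"
proof -
  define r where "r = (s + 1) / 2"
  have r1: "1 < r" using s1 by (simp add: r_def)
  obtain Z where Z: "0 \<le> Z" "\<And>A. finite A \<Longrightarrow> (\<Sum>k\<in>A-{(0,0)}. knorm k powr (-(2 * r))) \<le> Z"
    using Ksum[OF r1] by blast
  define p where "p = 2 / (s - 1)"
  have p0: "0 < p" using s1 by (simp add: p_def)
  define c0 where "c0 = 2 + 4 * ln 4 + sqrt Z"
  define c1 where "c1 = 4 * p"
  have lnc: "0 < ln (4::real)" by simp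
  have sZ: "0 \<le> sqrt Z" using Z(1) by simp
  show ?thesis
  proof (rule that[of c0 c1])
    show "0 < c0" using sZ lnc unfolding c0_def by linarith
    show "0 < c1" using p0 by (simp add: c1_def)
    fix f M b assume f0: "f (0,0) = 0" and fM: "bd 1 f M" and fb: "bd s f b"
    have M0: "0 \<le> M" using bd_nonneg[OF fM] .
    have b0: "0 \<le> b" using bd_nonneg[OF fb] .
    define N where "N = nat \<lceil>b powr p\<rceil> + 1"
    have bp0: "0 \<le> b powr p" by simp
    have cz: "0 \<le> \<lceil>b powr p\<rceil>" using bp0 by (simp; linarith)
    have Neq: "real N = real_of_int \<lceil>b powr p\<rceil> + 1" using cz by (simp add: N_def)
    have N1: "1 \<le> real N" using Neq cz by simp
    have Np: "0 < real N" using N1 by simp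
    have bpN: "b powr p \<le> real N" using Neq le_of_int_ceiling[of "b powr p"] by linarith
    have Nbp: "real N \<le> b powr p + 2" using Neq of_int_ceiling_le_add_one[of "b powr p"] by linarith
    define q where "q = real N powr ((s - 1) / 2)"
    have q0: "0 < q" using Np by (simp add: q_def)
    have bq: "b \<le> q"
    proof -
      have e: "p * ((s - 1) / 2) = 1" using s1 by (simp add: p_def field_simps)
      have "b = (b powr p) powr ((s - 1) / 2)" unfolding powr_powr e using b0 by simp
      also have "\<dots> \<le> q" unfolding q_def by (rule powr_mono2) (use s1 bpN in auto)
      finally show ?thesis .
    qed
    have qsq: "real N powr (-(s - 1)) = 1 / q\<^sup>2"
    proof -
      have "q\<^sup>2 = real N powr (2 * ((s - 1) / 2))" unfolding q_def powr_sq ..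
      also have "2 * ((s - 1) / 2) = s - 1" by simp
      finally have qe: "q\<^sup>2 = real N powr (s - 1)" .
      have a: "real N powr (-(s - 1)) = 1 / real N powr (s - 1)" by (rule powr_minus_divide)
      show ?thesis by (simp only: a qe)
    qed
    have lnN: "ln (real N + 1) \<le> ln 4 + p * ln (1 + b)"
    proof -
      have 1: "b powr p \<le> (1 + b) powr p" by (rule powr_mono2) (use p0 b0 in auto)
      have 2: "1 \<le> (1 + b) powr p" using p0 b0 by (simp add: ge_one_powr_ge_zero)
      have "real N + 1 \<le> 4 * (1 + b) powr p" using Nbp 1 2 by linarith
      hence "ln (real N + 1) \<le> ln (4 * (1 + b) powr p)" using Np by (subst ln_le_cancel_iff) auto
      also have "\<dots> = ln 4 + p * ln (1 + b)" using b0 by (simp add: ln_mult ln_powr)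
      finally show ?thesis .
    qed
    have lnb: "0 \<le> ln (1 + b)" using b0 by simp
    have lnN0: "0 \<le> ln (real N + 1)" using Np by simp
    show "l1 f ((1 + M) * (c0 + c1 * ln (1 + b)))" unfolding l1_def
    proof (intro allI impI)
      fix A :: "(int \<times> int) set" assume A: "finite A"
      define H where "H = {k\<in>A-{(0,0)}. knorm k \<le> real N}"
      define T where "T = {k\<in>A-{(0,0)}. \<not> knorm k \<le> real N}"
      have HT: "A - {(0,0)} = H \<union> T" "H \<inter> T = {}" by (auto simp: H_def T_def)
      have fH: "finite H" "finite T" using A by (auto simp: H_def T_def)
      have "(\<Sum>k\<in>A. cmod (f k)) = (\<Sum>k\<in>A-{(0,0)}. cmod (f k))" using sum_zero_mean[of f A] f0 by simp
      also have "\<dots> = (\<Sum>k\<in>H. cmod (f k)) + (\<Sum>k\<in>T. cmod (f k))"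
        unfolding HT(1) by (rule sum.union_disjoint[OF fH HT(2)])
      also have "(\<Sum>k\<in>H. cmod (f k)) \<le> 2 * (1 + 2 * ln (real N + 1)) * M"
      proof -
        have "(\<Sum>k\<in>H. cmod (f k)) = (\<Sum>k\<in>H. \<bar>1 / knorm k\<bar> * \<bar>knorm k powr 1 * cmod (f k)\<bar>)"
        proof (rule sum.cong[OF refl])
          fix k assume "k \<in> H"
          hence "k \<noteq> (0,0)" by (auto simp: H_def)
          hence "0 < knorm k" by (rule knorm_pos)
          thus "cmod (f k) = \<bar>1 / knorm k\<bar> * \<bar>knorm k powr 1 * cmod (f k)\<bar>" by (simp add: abs_mult)
        qed
        also have "\<dots> \<le> L2_set (\<lambda>k. 1 / knorm k) H * L2_set (\<lambda>k. knorm k powr 1 * cmod (f k)) H"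
          by (rule L2_set_mult_ineq)
        also have "\<dots> \<le> L2_set (\<lambda>k. 1 / knorm k) H * M"
          using fM fH unfolding bd_def by (intro mult_left_mono) auto
        also have "L2_set (\<lambda>k. 1 / knorm k) H \<le> 2 * (1 + 2 * ln (real N + 1))"
        proof -
          have "L2_set (\<lambda>k. 1 / knorm k) H \<le> sqrt (4 * (1 + 2 * ln (real N + 1))\<^sup>2)"
            unfolding L2_set_def by (rule real_sqrt_le_mono, rule head_bound) (use fH in \<open>auto simp: H_def\<close>)
          also have "\<dots> = 2 * (1 + 2 * ln (real N + 1))" using lnN0 by (simp add: real_sqrt_mult)
          finally show ?thesis .
        qed
        finally show ?thesis using M0 by (simp add: mult_right_mono)
      qed
      also have "(\<Sum>k\<in>T. cmod (f k)) \<le> sqrt Z"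
      proof -
        have "(\<Sum>k\<in>T. cmod (f k)) \<le> sqrt (\<Sum>k\<in>T. knorm k powr (-(2 * s))) * b"
          by (rule tail_CS[OF fb fH(2)]) (auto simp: T_def)
        also have "(\<Sum>k\<in>T. knorm k powr (-(2 * s))) \<le> (\<Sum>k\<in>T. knorm k powr (-(2 * r)) * real N powr (-(s - 1)))"
        proof (rule sum_mono)
          fix k assume k: "k \<in> T"
          hence k0: "k \<noteq> (0,0)" and kN: "real N < knorm k" by (auto simp: T_def)
          have kp: "0 < knorm k" using knorm_pos[OF k0] .
          have e: "-(2 * s) = -(2 * r) + -(s - 1)" by (simp add: r_def field_simps)
          have "knorm k powr (-(2 * s)) = knorm k powr (-(2 * r) + -(s - 1))" by (simp only: e)
          also have "\<dots> = knorm k powr (-(2 * r)) * knorm k powr (-(s - 1))" by (rule powr_add)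
          finally have "knorm k powr (-(2 * s)) = knorm k powr (-(2 * r)) * knorm k powr (-(s - 1))" .
          also have "\<dots> \<le> knorm k powr (-(2 * r)) * real N powr (-(s - 1))"
            by (intro mult_left_mono powr_mono2') (use s1 Np kN in auto)
          finally show "knorm k powr (-(2 * s)) \<le> knorm k powr (-(2 * r)) * real N powr (-(s - 1))" .
        qed
        also have "\<dots> = (\<Sum>k\<in>T. knorm k powr (-(2 * r))) * real N powr (-(s - 1))"
          by (simp add: sum_distrib_right)
        also have "\<dots> \<le> Z * real N powr (-(s - 1))"
        proof -
          have "T - {(0,0)} = T" by (auto simp: T_def)
          hence "(\<Sum>k\<in>T. knorm k powr (-(2 * r))) \<le> Z" using Z(2)[OF fH(2)] by simp
          thus ?thesis by (intro mult_right_mono) auto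
        qed
        also have "Z * real N powr (-(s - 1)) = Z / q\<^sup>2" using qsq by simp
        finally have "(\<Sum>k\<in>T. cmod (f k)) \<le> sqrt (Z / q\<^sup>2) * b"
          using b0 by (meson mult_right_mono order_trans real_sqrt_le_mono)
        also have "sqrt (Z / q\<^sup>2) * b = sqrt Z * (b / q)" using q0 by (simp add: real_sqrt_divide)
        also have "\<dots> \<le> sqrt Z * 1" using bq q0 sZ by (intro mult_left_mono) auto
        finally show ?thesis by simp
      qed
      finally have "(\<Sum>k\<in>A. cmod (f k)) \<le> 2 * (1 + 2 * ln (real N + 1)) * M + sqrt Z" by simp
      also have "\<dots> \<le> 2 * (1 + 2 * (ln 4 + p * ln (1 + b))) * M + sqrt Z"
        using lnN M0 by (intro add_right_mono mult_right_mono) auto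
      also have "\<dots> \<le> (1 + M) * (c0 + c1 * ln (1 + b))"
      proof -
        have "(1 + M) * (c0 + c1 * ln (1 + b)) = M * (2 + 4 * ln 4 + 4 * p * ln (1 + b)) + M * sqrt Z + (2 + 4 * ln 4 + 4 * p * ln (1 + b)) + sqrt Z"
          by (simp add: c0_def c1_def algebra_simps)
        moreover have "0 \<le> M * sqrt Z" using M0 sZ by simp
        moreover have "0 \<le> 2 + 4 * ln 4 + 4 * p * ln (1 + b)" using lnc lnb p0 by simp
        ultimately show ?thesis by (simp add: algebra_simps)
      qed
      finally show "(\<Sum>k\<in>A. cmod (f k)) \<le> (1 + M) * (c0 + c1 * ln (1 + b))" .
    qed
  qed
qed


definition dif :: "int \<times> int \<Rightarrow> int \<times> int \<Rightarrow> int \<times> int" where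
  "dif k j = (fst k - fst j, snd k - snd j)"

lemma dif_dif[simp]: "dif k (dif k j) = j" by (simp add: dif_def)

lemma knorm_dif: "knorm k \<le> knorm j + knorm (dif k j)"
  using knorm_triangle[of "fst j" "fst k - fst j" "snd j" "snd k - snd j"] by (simp add: dif_def)

definition conv :: "(int \<times> int \<Rightarrow> real) \<Rightarrow> (int \<times> int \<Rightarrow> real) \<Rightarrow> int \<times> int \<Rightarrow> real" where
  "conv u v k = (\<Sum>\<^sub>\<infinity>j. u j * v (dif k j))"

lemma summable_reindex_dif:
  fixes g :: "int \<times> int \<Rightarrow> 'b::{comm_monoid_add,t2_space}"
  shows "(\<lambda>j. g (dif k j)) summable_on UNIV \<longleftrightarrow> g summable_on UNIV"
proof -
  have "bij_betw (dif k) UNIV UNIV" by (rule bij_betwI[where g="dif k"]) auto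
  thus ?thesis using summable_on_reindex_bij_betw[of "dif k" UNIV UNIV g] by (simp add: o_def)
qed

lemma infsum_reindex_dif:
  fixes g :: "int \<times> int \<Rightarrow> 'b::{comm_monoid_add,t2_space}"
  shows "(\<Sum>\<^sub>\<infinity>j. g (dif k j)) = (\<Sum>\<^sub>\<infinity>j. g j)"
proof -
  have "bij_betw (dif k) UNIV UNIV" by (rule bij_betwI[where g="dif k"]) auto
  thus ?thesis using infsum_reindex_bij_betw[of "dif k" UNIV UNIV g] by (simp add: o_def)
qed

lemma conv_comm: "conv u v k = conv v u k"
  unfolding conv_def using infsum_reindex_dif[of "\<lambda>j. u j * v (dif k j)" k] by (simp add: mult.commute)

lemma l1_summable: assumes "l1 f L" shows "(\<lambda>j. cmod (f j)) summable_on UNIV" "(\<Sum>\<^sub>\<infinity>j. cmod (f j)) \<le> L"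
proof -
  show s: "(\<lambda>j. cmod (f j)) summable_on UNIV"
    by (rule nonneg_bdd_above_summable_on) (use assms in \<open>auto simp: l1_def intro!: bdd_aboveI[where M=L]\<close>)
  show "(\<Sum>\<^sub>\<infinity>j. cmod (f j)) \<le> L" by (rule infsum_le_finite_sums[OF s]) (use assms in \<open>auto simp: l1_def\<close>)
qed

lemma l1_nonneg: "l1 f L \<Longrightarrow> 0 \<le> L"
  unfolding l1_def by (metis finite.emptyI sum.empty)

lemma young:
  fixes u v :: "int \<times> int \<Rightarrow> real"
  assumes u0: "\<And>j. 0 \<le> u j" and v0: "\<And>j. 0 \<le> v j" and us: "u summable_on UNIV"
    and ub: "\<And>F. finite F \<Longrightarrow> sum u F \<le> c1"
    and vb: "\<And>A. finite A \<Longrightarrow> L2_set v A \<le> c2"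
  shows "(\<lambda>j. u j * v (dif k j)) summable_on UNIV"
    and "finite A \<Longrightarrow> L2_set (conv u v) A \<le> c1 * c2"
proof -
  have vc: "v m \<le> c2" for m using vb[of "{m}"] v0[of m] by simp
  have c20: "0 \<le> c2" using vb[of "{}"] by simp
  have c10: "0 \<le> c1" using ub[of "{}"] by simp
  have sm: "(\<lambda>j. u j * v (dif k j)) summable_on UNIV" for k
  proof (rule summable_on_comparison_test[OF summable_on_cmult_left[OF us, of c2]])
    fix j :: "int \<times> int"
    show "u j * v (dif k j) \<le> u j * c2" using mult_left_mono[OF vc u0] .
    show "0 \<le> u j * v (dif k j)" using u0 v0 by simp
  qed
  thus "(\<lambda>j. u j * v (dif k j)) summable_on UNIV" .
  assume A: "finite A"
  have fin: "L2_set (\<lambda>k. \<Sum>j\<in>J. u j * v (dif k j)) A \<le> (\<Sum>j\<in>J. u j) * c2" if J: "finite J" for J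
    using J
  proof (induction J rule: finite_induct)
    case empty thus ?case by (simp add: L2_set_def)
  next
    case (insert x J)
    have "L2_set (\<lambda>k. \<Sum>j\<in>insert x J. u j * v (dif k j)) A
        = L2_set (\<lambda>k. u x * v (dif k x) + (\<Sum>j\<in>J. u j * v (dif k j))) A"
      using insert by simp
    also have "\<dots> \<le> L2_set (\<lambda>k. u x * v (dif k x)) A + L2_set (\<lambda>k. \<Sum>j\<in>J. u j * v (dif k j)) A"
      by (rule L2_set_triangle_ineq)
    also have "L2_set (\<lambda>k. u x * v (dif k x)) A = u x * L2_set (\<lambda>k. v (dif k x)) A"
      using u0 by (simp add: L2_set_right_distrib)
    also have "L2_set (\<lambda>k. v (dif k x)) A \<le> c2"
    proof -
      have inj: "inj_on (\<lambda>k. dif k x) A" by (rule inj_onI) (auto simp: dif_def prod_eq_iff)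
      have "L2_set (\<lambda>k. v (dif k x)) A = L2_set v ((\<lambda>k. dif k x) ` A)"
        unfolding L2_set_def using sum.reindex[OF inj, of "\<lambda>m. (v m)\<^sup>2"] by (simp add: o_def)
      also have "\<dots> \<le> c2" by (rule vb) (use A in auto)
      finally show ?thesis .
    qed
    finally have "L2_set (\<lambda>k. \<Sum>j\<in>insert x J. u j * v (dif k j)) A \<le> u x * c2 + (\<Sum>j\<in>J. u j) * c2"
      using insert.IH u0[of x] by (smt (verit) mult_left_mono)
    thus ?case using insert by (simp add: distrib_right)
  qed
  have lim: "((\<lambda>J. L2_set (\<lambda>k. \<Sum>j\<in>J. u j * v (dif k j)) A) \<longlongrightarrow> L2_set (conv u v) A) (finite_subsets_at_top UNIV)"
  proof -
    have "((\<lambda>J. \<Sum>j\<in>J. u j * v (dif k j)) \<longlongrightarrow> conv u v k) (finite_subsets_at_top UNIV)" for k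
      using has_sum_infsum[OF sm[of k]] unfolding has_sum_def conv_def .
    thus ?thesis unfolding L2_set_def by (intro tendsto_intros)
  qed
  have ev: "\<forall>\<^sub>F J in finite_subsets_at_top UNIV. L2_set (\<lambda>k. \<Sum>j\<in>J. u j * v (dif k j)) A \<le> c1 * c2"
  proof (rule eventually_finite_subsets_at_top_weakI)
    fix J :: "(int \<times> int) set" assume "finite J" "J \<subseteq> UNIV"
    hence "L2_set (\<lambda>k. \<Sum>j\<in>J. u j * v (dif k j)) A \<le> (\<Sum>j\<in>J. u j) * c2" using fin by blast
    also have "\<dots> \<le> c1 * c2" using ub[OF \<open>finite J\<close>] c20 by (rule mult_right_mono)
    finally show "L2_set (\<lambda>k. \<Sum>j\<in>J. u j * v (dif k j)) A \<le> c1 * c2" .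
  qed
  show "L2_set (conv u v) A \<le> c1 * c2"
    by (rule tendsto_upperbound[OF lim ev]) simp
qed


definition herm :: "(int \<times> int \<Rightarrow> complex) \<Rightarrow> bool" where
  "herm f \<longleftrightarrow> (\<forall>k. f (- fst k, - snd k) = cnj (f k))"

definition fluxB :: "(int \<times> int \<Rightarrow> complex) \<Rightarrow> (int \<times> int \<Rightarrow> complex) \<Rightarrow> int \<times> int \<Rightarrow> complex" where
  "fluxB f g k = \<i> * (of_int (fst k) * (\<Sum>\<^sub>\<infinity>j. fst (vel f j) * g (dif k j))
                   + of_int (snd k) * (\<Sum>\<^sub>\<infinity>j. snd (vel f j) * g (dif k j)))"

definition FB :: "real \<Rightarrow> (int \<times> int \<Rightarrow> complex) \<Rightarrow> (int \<times> int \<Rightarrow> complex) \<Rightarrow> int \<times> int \<Rightarrow> complex" where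
  "FB \<mu> f g k = fluxB f g k / of_real (1 + \<mu> * knorm k)"

lemma flux_div_eq: "flux_div f = fluxB f f"
  by (rule ext) (simp add: flux_div_def fluxB_def dif_def)

lemma integrand_eq: "flux_div f k / of_real (1 + \<mu> * knorm k powr (2 * (1/2))) = FB \<mu> f f k"
  by (simp add: FB_def flux_div_eq)

lemma FB_zero[simp]: "FB \<mu> f g (0,0) = 0"
  by (simp add: FB_def fluxB_def)

lemma vel_bound: "cmod (fst (vel f j)) \<le> cmod (f j)" "cmod (snd (vel f j)) \<le> cmod (f j)"
proof -
  have "cmod (fst (vel f j)) \<le> cmod (f j) \<and> cmod (snd (vel f j)) \<le> cmod (f j)"
  proof (cases "j = (0,0)")
    case True thus ?thesis by (simp add: vel_def)
  next
    case False
    have kp: "0 < knorm j" by (rule knorm_pos[OF False])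
    have 1: "\<bar>real_of_int (snd j)\<bar> / knorm j \<le> 1" "\<bar>real_of_int (fst j)\<bar> / knorm j \<le> 1"
      using abs_fst_le_knorm[of j] abs_snd_le_knorm[of j] kp by (auto simp: divide_simps)
    have "cmod (fst (vel f j)) = (\<bar>real_of_int (snd j)\<bar> / knorm j) * cmod (f j)"
      using False kp by (simp add: vel_def norm_mult norm_divide)
    also have "\<dots> \<le> cmod (f j)" using mult_right_mono[OF 1(1), of "cmod (f j)"] by simp
    finally have a: "cmod (fst (vel f j)) \<le> cmod (f j)" .
    have "cmod (snd (vel f j)) = (\<bar>real_of_int (fst j)\<bar> / knorm j) * cmod (f j)"
      using False kp by (simp add: vel_def norm_mult norm_divide)
    also have "\<dots> \<le> cmod (f j)" using mult_right_mono[OF 1(2), of "cmod (f j)"] by simp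
    finally show ?thesis using a by simp
  qed
  thus "cmod (fst (vel f j)) \<le> cmod (f j)" "cmod (snd (vel f j)) \<le> cmod (f j)" by auto
qed

lemma cprod_summable:
  assumes "l1 f L" "\<And>m. cmod (g m) \<le> G" "\<And>j. cmod (a j) \<le> cmod (f j)"
  shows "(\<lambda>j. a j * g (dif k j)) summable_on UNIV"
    and "(\<lambda>j. cmod (f j) * cmod (g (dif k j))) summable_on UNIV"
proof -
  have s: "(\<lambda>j. cmod (f j) * G) summable_on UNIV"
    by (rule summable_on_cmult_left[OF l1_summable(1)[OF assms(1)]])
  show s2: "(\<lambda>j. cmod (f j) * cmod (g (dif k j))) summable_on UNIV"
  proof (rule summable_on_comparison_test[OF s])
    fix j :: "int \<times> int"
    show "cmod (f j) * cmod (g (dif k j)) \<le> cmod (f j) * G" by (rule mult_left_mono[OF assms(2)]) simp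
  qed simp
  show "(\<lambda>j. a j * g (dif k j)) summable_on UNIV"
    unfolding summable_on_iff_abs_summable_on_complex
  proof (rule summable_on_comparison_test[OF s2])
    fix j :: "int \<times> int"
    show "norm (a j * g (dif k j)) \<le> cmod (f j) * cmod (g (dif k j))"
      unfolding norm_mult by (rule mult_right_mono[OF assms(3)]) simp
  qed simp
qed

lemma fluxB_pt:
  assumes "l1 f L" "\<And>m. cmod (g m) \<le> G"
  shows "cmod (fluxB f g k) \<le> 2 * knorm k * (\<Sum>\<^sub>\<infinity>j. cmod (f j) * cmod (g (dif k j)))"
proof -
  define P where "P = (\<Sum>\<^sub>\<infinity>j. cmod (f j) * cmod (g (dif k j)))"
  have sP: "(\<lambda>j. cmod (f j) * cmod (g (dif k j))) summable_on UNIV"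
    by (rule cprod_summable(2)[of f L g G "\<lambda>j. fst (vel f j)" k, OF assms vel_bound(1)])
  have S: "cmod (\<Sum>\<^sub>\<infinity>j. a j * g (dif k j)) \<le> P" if a: "\<And>j. cmod (a j) \<le> cmod (f j)" for a
  proof -
    have sa: "(\<lambda>j. a j * g (dif k j)) summable_on UNIV" by (rule cprod_summable(1)[OF assms a])
    show ?thesis unfolding P_def
      by (rule norm_infsum_le[OF has_sum_infsum[OF sa] has_sum_infsum[OF sP]])
         (simp add: norm_mult mult_right_mono a)
  qed
  have S1: "cmod (\<Sum>\<^sub>\<infinity>j. fst (vel f j) * g (dif k j)) \<le> P" by (rule S) (rule vel_bound)
  have S2: "cmod (\<Sum>\<^sub>\<infinity>j. snd (vel f j) * g (dif k j)) \<le> P" by (rule S) (rule vel_bound)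
  have P0: "0 \<le> P" unfolding P_def by (rule infsum_nonneg) simp
  define T1 where "T1 = (\<Sum>\<^sub>\<infinity>j. fst (vel f j) * g (dif k j))"
  define T2 where "T2 = (\<Sum>\<^sub>\<infinity>j. snd (vel f j) * g (dif k j))"
  have "cmod (fluxB f g k) = cmod (of_int (fst k) * T1 + of_int (snd k) * T2)"
    by (simp add: fluxB_def norm_mult T1_def T2_def)
  also have "\<dots> \<le> cmod (of_int (fst k) * T1) + cmod (of_int (snd k) * T2)" by (rule norm_triangle_ineq)
  also have "\<dots> = \<bar>real_of_int (fst k)\<bar> * cmod (\<Sum>\<^sub>\<infinity>j. fst (vel f j) * g (dif k j))
      + \<bar>real_of_int (snd k)\<bar> * cmod (\<Sum>\<^sub>\<infinity>j. snd (vel f j) * g (dif k j))"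
    unfolding T1_def T2_def norm_mult by simp
  also have "\<dots> \<le> knorm k * P + knorm k * P"
    by (intro add_mono mult_mono abs_fst_le_knorm abs_snd_le_knorm S1 S2) (auto simp: P0)
  finally show ?thesis unfolding P_def by simp
qed

lemma FB_pt:
  assumes "0 < \<mu>" "l1 f L" "\<And>m. cmod (g m) \<le> G"
  shows "cmod (FB \<mu> f g k) \<le> (2 / \<mu>) * (\<Sum>\<^sub>\<infinity>j. cmod (f j) * cmod (g (dif k j)))"
proof -
  define P where "P = (\<Sum>\<^sub>\<infinity>j. cmod (f j) * cmod (g (dif k j)))"
  have P0: "0 \<le> P" unfolding P_def by (rule infsum_nonneg) simp
  have d: "0 < 1 + \<mu> * knorm k" using assms(1) by (simp add: add_pos_nonneg)
  have "cmod (FB \<mu> f g k) = cmod (fluxB f g k) / \<bar>1 + \<mu> * knorm k\<bar>"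
    by (simp only: FB_def norm_divide norm_of_real)
  also have "\<dots> = cmod (fluxB f g k) / (1 + \<mu> * knorm k)" using d by simp
  also have "\<dots> \<le> 2 * knorm k * P / (1 + \<mu> * knorm k)"
    using fluxB_pt[of f L g G k, OF assms(2,3)] d unfolding P_def by (simp add: divide_right_mono)
  also have "\<dots> \<le> (2 / \<mu>) * P"
    using d assms(1) P0 by (simp add: divide_simps) (simp add: algebra_simps mult_left_mono)
  finally show ?thesis unfolding P_def .
qed

lemma weight_split: assumes "0 \<le> s"
  shows "knorm k powr s \<le> 2 powr s * (knorm j powr s + knorm (dif k j) powr s)"
proof -
  define m where "m = max (knorm j) (knorm (dif k j))"
  have "knorm k \<le> 2 * m" using knorm_dif[of k j] unfolding m_def by linarith
  hence "knorm k powr s \<le> (2 * m) powr s" by (rule powr_mono2[OF assms knorm_nonneg])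
  also have "\<dots> = 2 powr s * m powr s" by (simp add: powr_mult m_def)
  also have "m powr s \<le> knorm j powr s + knorm (dif k j) powr s" unfolding m_def by (simp add: max_def)
  finally show ?thesis by simp
qed

lemma bd_weight: assumes "bd s f b" shows "knorm j powr s * cmod (f j) \<le> b"
proof -
  have "L2_set (\<lambda>k. knorm k powr s * cmod (f k)) {j} \<le> b" using assms unfolding bd_def by blast
  thus ?thesis by simp
qed


lemma FB_bd:
  assumes mu: "0 < \<mu>" and s: "0 \<le> s"
    and g0: "g (0,0) = 0" and fb: "bd s f bf" and gb: "bd s g bg" and fl: "l1 f Lf" and gl: "l1 g Lg"
  shows "bd s (FB \<mu> f g) ((2 * 2 powr s / \<mu>) * (Lg * bf + Lf * bg))"
proof -
  define af where "af j = cmod (f j)" for j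
  define ag where "ag j = cmod (g j)" for j
  define Wf where "Wf j = knorm j powr s * cmod (f j)" for j
  define Wg where "Wg j = knorm j powr s * cmod (g j)" for j
  have gG: "cmod (g m) \<le> bg" for m by (rule bd_coeff0[OF gb s g0])
  have Wfb: "Wf j \<le> bf" for j unfolding Wf_def by (rule bd_weight[OF fb])
  have Wgb: "Wg j \<le> bg" for j unfolding Wg_def by (rule bd_weight[OF gb])
  have saf: "af summable_on UNIV" unfolding af_def by (rule l1_summable(1)[OF fl])
  have sag: "ag summable_on UNIV" unfolding ag_def by (rule l1_summable(1)[OF gl])
  have sagd: "(\<lambda>j. ag (dif k j)) summable_on UNIV" for k using sag by (simp add: summable_reindex_dif)
  have s1: "(\<lambda>j. Wf j * ag (dif k j)) summable_on UNIV" for k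
  proof (rule summable_on_comparison_test[OF summable_on_cmult_right[OF sagd, of bf k]])
    fix j :: "int \<times> int"
    show "Wf j * ag (dif k j) \<le> bf * ag (dif k j)" by (rule mult_right_mono[OF Wfb]) (simp add: ag_def)
    show "0 \<le> Wf j * ag (dif k j)" by (simp add: Wf_def ag_def)
  qed
  have s2: "(\<lambda>j. af j * Wg (dif k j)) summable_on UNIV" for k
  proof (rule summable_on_comparison_test[OF summable_on_cmult_left[OF saf, of bg]])
    fix j :: "int \<times> int"
    show "af j * Wg (dif k j) \<le> af j * bg" by (rule mult_left_mono[OF Wgb]) (simp add: af_def)
    show "0 \<le> af j * Wg (dif k j)" by (simp add: Wg_def af_def)
  qed
  have sP: "(\<lambda>j. af j * ag (dif k j)) summable_on UNIV" for k
    unfolding af_def ag_def by (rule cprod_summable(2)[of f Lf g bg "\<lambda>j. f j" k, OF fl gG]) simp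
  have conv_eq: "(\<Sum>\<^sub>\<infinity>j. Wf j * ag (dif k j)) = conv ag Wf k" for k
    using conv_comm[of Wf ag k] by (simp add: conv_def)
  have pt: "knorm k powr s * cmod (FB \<mu> f g k) \<le> (2 / \<mu>) * 2 powr s * (conv ag Wf k + conv af Wg k)" for k
  proof -
    have "knorm k powr s * cmod (FB \<mu> f g k) \<le> knorm k powr s * ((2 / \<mu>) * (\<Sum>\<^sub>\<infinity>j. af j * ag (dif k j)))"
      unfolding af_def ag_def by (rule mult_left_mono[OF FB_pt[of \<mu> f Lf g bg k, OF mu fl gG]]) simp
    also have "\<dots> = (2 / \<mu>) * (\<Sum>\<^sub>\<infinity>j. knorm k powr s * (af j * ag (dif k j)))"
      by (simp add: infsum_cmult_right[OF sP])
    finally have e1: "knorm k powr s * cmod (FB \<mu> f g k) \<le> (2 / \<mu>) * (\<Sum>\<^sub>\<infinity>j. knorm k powr s * (af j * ag (dif k j)))" .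
    have "(\<Sum>\<^sub>\<infinity>j. knorm k powr s * (af j * ag (dif k j)))
        \<le> (\<Sum>\<^sub>\<infinity>j. 2 powr s * (Wf j * ag (dif k j) + af j * Wg (dif k j)))"
    proof (rule infsum_mono)
      show "(\<lambda>j. knorm k powr s * (af j * ag (dif k j))) summable_on UNIV"
        by (rule summable_on_cmult_right[OF sP])
      show "(\<lambda>j. 2 powr s * (Wf j * ag (dif k j) + af j * Wg (dif k j))) summable_on UNIV"
        by (rule summable_on_cmult_right[OF summable_on_add[OF s1 s2]])
      fix j :: "int \<times> int"
      have "knorm k powr s * (af j * ag (dif k j)) \<le> (2 powr s * (knorm j powr s + knorm (dif k j) powr s)) * (af j * ag (dif k j))"
        by (rule mult_right_mono[OF weight_split[OF s]]) (simp add: af_def ag_def)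
      also have "\<dots> = 2 powr s * (Wf j * ag (dif k j) + af j * Wg (dif k j))"
        by (simp add: Wf_def Wg_def af_def ag_def algebra_simps)
      finally show "knorm k powr s * (af j * ag (dif k j)) \<le> 2 powr s * (Wf j * ag (dif k j) + af j * Wg (dif k j))" .
    qed
    also have "(\<Sum>\<^sub>\<infinity>j. 2 powr s * (Wf j * ag (dif k j) + af j * Wg (dif k j)))
        = 2 powr s * ((\<Sum>\<^sub>\<infinity>j. Wf j * ag (dif k j)) + (\<Sum>\<^sub>\<infinity>j. af j * Wg (dif k j)))"
      by (simp add: infsum_cmult_right[OF summable_on_add[OF s1 s2]] infsum_add[OF s1 s2])
    also have "\<dots> = 2 powr s * (conv ag Wf k + conv af Wg k)" by (simp add: conv_eq conv_def)
    finally have e2: "(\<Sum>\<^sub>\<infinity>j. knorm k powr s * (af j * ag (dif k j))) \<le> 2 powr s * (conv ag Wf k + conv af Wg k)" .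
    have "(2 / \<mu>) * (\<Sum>\<^sub>\<infinity>j. knorm k powr s * (af j * ag (dif k j))) \<le> (2 / \<mu>) * (2 powr s * (conv ag Wf k + conv af Wg k))"
      by (rule mult_left_mono[OF e2]) (use mu in simp)
    with e1 show ?thesis by (simp add: mult.assoc)
  qed
  have cnn: "0 \<le> conv u v k" if "\<And>j. 0 \<le> u j" "\<And>j. 0 \<le> v j" for u v k
    unfolding conv_def by (rule infsum_nonneg) (simp add: that)
  show ?thesis unfolding bd_def
  proof (intro allI impI)
    fix A :: "(int \<times> int) set" assume A: "finite A"
    have y1: "L2_set (conv ag Wf) A \<le> Lg * bf"
      by (rule young(2)[OF _ _ sag _ _ A]) (use gl fb in \<open>auto simp: ag_def Wf_def[abs_def] l1_def bd_def\<close>)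
    have y2: "L2_set (conv af Wg) A \<le> Lf * bg"
      by (rule young(2)[OF _ _ saf _ _ A]) (use fl gb in \<open>auto simp: af_def Wg_def[abs_def] l1_def bd_def\<close>)
    have "L2_set (\<lambda>k. knorm k powr s * cmod (FB \<mu> f g k)) A
        \<le> L2_set (\<lambda>k. (2 / \<mu> * 2 powr s) * (conv ag Wf k + conv af Wg k)) A"
      by (rule L2_set_mono) (use pt in auto)
    also have "\<dots> = (2 / \<mu> * 2 powr s) * L2_set (\<lambda>k. conv ag Wf k + conv af Wg k) A"
      by (rule L2_set_right_distrib[symmetric]) (use mu in simp)
    also have "\<dots> \<le> (2 / \<mu> * 2 powr s) * (L2_set (conv ag Wf) A + L2_set (conv af Wg) A)"
      using mu by (intro mult_left_mono L2_set_triangle_ineq) auto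
    also have "\<dots> \<le> (2 / \<mu> * 2 powr s) * (Lg * bf + Lf * bg)"
      using mu y1 y2 by (intro mult_left_mono add_mono) auto
    finally show "L2_set (\<lambda>k. knorm k powr s * cmod (FB \<mu> f g k)) A \<le> (2 * 2 powr s / \<mu>) * (Lg * bf + Lf * bg)"
      by simp
  qed
qed


lemma vel_diff: "fst (vel (\<lambda>j. f j - g j) j) = fst (vel f j) - fst (vel g j)"
  "snd (vel (\<lambda>j. f j - g j) j) = snd (vel f j) - snd (vel g j)"
  by (simp_all add: vel_def algebra_simps diff_divide_distrib)

lemma l1_diff: assumes "l1 f a" "l1 g b" shows "l1 (\<lambda>j. f j - g j) (a + b)"
  unfolding l1_def
proof (intro allI impI)
  fix A :: "(int \<times> int) set" assume A: "finite A"
  have "(\<Sum>k\<in>A. cmod (f k - g k)) \<le> (\<Sum>k\<in>A. cmod (f k) + cmod (g k))"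
    by (rule sum_mono) (rule norm_triangle_ineq4)
  also have "\<dots> = (\<Sum>k\<in>A. cmod (f k)) + (\<Sum>k\<in>A. cmod (g k))" by (rule sum.distrib)
  also have "\<dots> \<le> a + b" using assms A unfolding l1_def by (meson add_mono)
  finally show "(\<Sum>k\<in>A. cmod (f k - g k)) \<le> a + b" .
qed

lemma lin_aux: fixes A B C D E F G H x y :: complex
  assumes "A - C = E + G" "B - D = F + H"
  shows "\<i> * (x * A + y * B) - \<i> * (x * C + y * D) = \<i> * (x * E + y * F) + \<i> * (x * G + y * H)"
proof -
  have "\<i> * (x * A + y * B) - \<i> * (x * C + y * D) = \<i> * (x * (A - C) + y * (B - D))" by (simp add: algebra_simps)
  also have "\<dots> = \<i> * (x * E + y * F) + \<i> * (x * G + y * H)" unfolding assms by (simp add: algebra_simps)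
  finally show ?thesis .
qed

lemma fluxB_diff:
  assumes fl: "l1 f Lf" and gl: "l1 g Lg" and fG: "\<And>m. cmod (f m) \<le> Gf" and gG: "\<And>m. cmod (g m) \<le> Gg"
  shows "fluxB f f k - fluxB g g k = fluxB (\<lambda>j. f j - g j) f k + fluxB g (\<lambda>j. f j - g j) k"
proof -
  define h where "h j = f j - g j" for j
  have hl: "l1 h (Lf + Lg)" unfolding h_def by (rule l1_diff[OF fl gl])
  have hG: "cmod (h m) \<le> Gf + Gg" for m
    unfolding h_def using norm_triangle_ineq4[of "f m" "g m"] fG[of m] gG[of m] by linarith
  have key: "(\<Sum>\<^sub>\<infinity>j. a f j * f (dif k j)) - (\<Sum>\<^sub>\<infinity>j. a g j * g (dif k j))
      = (\<Sum>\<^sub>\<infinity>j. a h j * f (dif k j)) + (\<Sum>\<^sub>\<infinity>j. a g j * h (dif k j))"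
    if a1: "\<And>F j. cmod (a F j) \<le> cmod (F j)" and a2: "\<And>j. a h j = a f j - a g j" for a
  proof -
    have s1: "(\<lambda>j. a f j * f (dif k j)) summable_on UNIV"
      by (rule cprod_summable(1)[of f Lf f Gf "a f" k, OF fl fG a1])
    have s2: "(\<lambda>j. a g j * g (dif k j)) summable_on UNIV"
      by (rule cprod_summable(1)[of g Lg g Gg "a g" k, OF gl gG a1])
    have s3: "(\<lambda>j. a h j * f (dif k j)) summable_on UNIV"
      by (rule cprod_summable(1)[of h "Lf + Lg" f Gf "a h" k, OF hl fG a1])
    have s4: "(\<lambda>j. a g j * h (dif k j)) summable_on UNIV"
      by (rule cprod_summable(1)[of g Lg h "Gf + Gg" "a g" k, OF gl hG a1])
    have s2': "(\<lambda>j. - (a g j * g (dif k j))) summable_on UNIV" using s2 by (simp add: summable_on_uminus)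
    have "(\<Sum>\<^sub>\<infinity>j. a h j * f (dif k j)) + (\<Sum>\<^sub>\<infinity>j. a g j * h (dif k j))
        = (\<Sum>\<^sub>\<infinity>j. a h j * f (dif k j) + a g j * h (dif k j))" by (rule infsum_add[OF s3 s4, symmetric])
    also have "\<dots> = (\<Sum>\<^sub>\<infinity>j. a f j * f (dif k j) + - (a g j * g (dif k j)))"
      by (rule infsum_cong) (simp add: a2 h_def algebra_simps)
    also have "\<dots> = (\<Sum>\<^sub>\<infinity>j. a f j * f (dif k j)) + (\<Sum>\<^sub>\<infinity>j. - (a g j * g (dif k j)))"
      by (rule infsum_add[OF s1 s2'])
    also have "\<dots> = (\<Sum>\<^sub>\<infinity>j. a f j * f (dif k j)) - (\<Sum>\<^sub>\<infinity>j. a g j * g (dif k j))"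
      by (simp add: infsum_uminus)
    finally show ?thesis by simp
  qed
  have k1: "(\<Sum>\<^sub>\<infinity>j. fst (vel f j) * f (dif k j)) - (\<Sum>\<^sub>\<infinity>j. fst (vel g j) * g (dif k j))
      = (\<Sum>\<^sub>\<infinity>j. fst (vel h j) * f (dif k j)) + (\<Sum>\<^sub>\<infinity>j. fst (vel g j) * h (dif k j))"
    by (rule key[of "\<lambda>F j. fst (vel F j)"]) (simp_all add: vel_bound h_def[abs_def] vel_diff)
  have k2: "(\<Sum>\<^sub>\<infinity>j. snd (vel f j) * f (dif k j)) - (\<Sum>\<^sub>\<infinity>j. snd (vel g j) * g (dif k j))
      = (\<Sum>\<^sub>\<infinity>j. snd (vel h j) * f (dif k j)) + (\<Sum>\<^sub>\<infinity>j. snd (vel g j) * h (dif k j))"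
    by (rule key[of "\<lambda>F j. snd (vel F j)"]) (simp_all add: vel_bound h_def[abs_def] vel_diff)
  show ?thesis unfolding fluxB_def h_def[symmetric] by (rule lin_aux[OF k1 k2])
qed

lemma FB_diff:
  assumes "l1 f Lf" "l1 g Lg" "\<And>m. cmod (f m) \<le> Gf" "\<And>m. cmod (g m) \<le> Gg"
  shows "FB \<mu> f f k - FB \<mu> g g k = FB \<mu> (\<lambda>j. f j - g j) f k + FB \<mu> g (\<lambda>j. f j - g j) k"
  unfolding FB_def using fluxB_diff[of f Lf g Lg Gf Gg k, OF assms]
  by (simp add: diff_divide_distrib[symmetric] add_divide_distrib[symmetric])

lemma neg_bij: "bij_betw (\<lambda>j::int \<times> int. (- fst j, - snd j)) UNIV UNIV"
  by (rule bij_betwI[where g="\<lambda>j. (- fst j, - snd j)"]) auto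

lemma vel_neg: assumes "herm f"
  shows "fst (vel f (- fst j, - snd j)) = cnj (fst (vel f j))" "snd (vel f (- fst j, - snd j)) = cnj (snd (vel f j))"
proof -
  have fj: "f (- fst j, - snd j) = cnj (f j)" using assms unfolding herm_def by blast
  have kn: "knorm (- fst j, - snd j) = knorm j" by (cases j) simp
  have z: "((- fst j, - snd j) = (0,0)) = (j = (0,0))" by (cases j) auto
  show "fst (vel f (- fst j, - snd j)) = cnj (fst (vel f j))"
    unfolding vel_def using fj kn z by (simp add: complex_cnj_mult)
  show "snd (vel f (- fst j, - snd j)) = cnj (snd (vel f j))"
    unfolding vel_def using fj kn z by (simp add: complex_cnj_mult)
qed

lemma FB_herm: assumes h: "herm f" shows "herm (FB \<mu> f f)"
  unfolding herm_def
proof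
  fix k :: "int \<times> int"
  have fneg: "f (- fst j, - snd j) = cnj (f j)" for j using h unfolding herm_def by blast
  have S: "(\<Sum>\<^sub>\<infinity>j. a j * f (dif (- fst k, - snd k) j)) = cnj (\<Sum>\<^sub>\<infinity>j. a j * f (dif k j))"
    if a: "\<And>j. a (- fst j, - snd j) = cnj (a j)" for a
  proof -
    have "(\<Sum>\<^sub>\<infinity>j. a j * f (dif (- fst k, - snd k) j))
        = (\<Sum>\<^sub>\<infinity>j. a (- fst j, - snd j) * f (dif (- fst k, - snd k) (- fst j, - snd j)))"
      using infsum_reindex_bij_betw[OF neg_bij, of "\<lambda>j. a j * f (dif (- fst k, - snd k) j)"] by simp
    also have "\<dots> = (\<Sum>\<^sub>\<infinity>j. cnj (a j * f (dif k j)))"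
    proof (rule infsum_cong)
      fix j
      have "dif (- fst k, - snd k) (- fst j, - snd j) = (- fst (dif k j), - snd (dif k j))" by (simp add: dif_def)
      thus "a (- fst j, - snd j) * f (dif (- fst k, - snd k) (- fst j, - snd j)) = cnj (a j * f (dif k j))"
        by (simp add: a fneg)
    qed
    also have "\<dots> = cnj (\<Sum>\<^sub>\<infinity>j. a j * f (dif k j))" by (rule infsum_cnj)
    finally show ?thesis .
  qed
  have S1: "(\<Sum>\<^sub>\<infinity>j. fst (vel f j) * f (dif (- fst k, - snd k) j)) = cnj (\<Sum>\<^sub>\<infinity>j. fst (vel f j) * f (dif k j))"
    by (rule S) (rule vel_neg[OF h])
  have S2: "(\<Sum>\<^sub>\<infinity>j. snd (vel f j) * f (dif (- fst k, - snd k) j)) = cnj (\<Sum>\<^sub>\<infinity>j. snd (vel f j) * f (dif k j))"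
    by (rule S) (rule vel_neg[OF h])
  have kn: "knorm (- fst k, - snd k) = knorm k" by (cases k) simp
  show "FB \<mu> f f (- fst k, - snd k) = cnj (FB \<mu> f f k)"
    unfolding FB_def fluxB_def using S1 S2 kn by (simp add: algebra_simps)
qed


lemma int_bd:
  assumes ab: "a \<le> b" and int: "\<And>k. (\<lambda>\<sigma>. g \<sigma> k) integrable_on {a..b}"
    and bnd: "\<And>\<sigma>. \<sigma> \<in> {a..b} \<Longrightarrow> bd s (g \<sigma>) c"
  shows "bd s (\<lambda>k. integral {a..b} (\<lambda>\<sigma>. g \<sigma> k)) ((b - a) * c)"
  unfolding bd_def
proof (intro allI impI)
  fix A :: "(int \<times> int) set" assume A: "finite A"
  define I where "I k = integral {a..b} (\<lambda>\<sigma>. g \<sigma> k)" for k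
  define w where "w k = knorm k powr s" for k
  define S where "S = (\<Sum>k\<in>A. (w k * cmod (I k))\<^sup>2)"
  have c0: "0 \<le> c" using bnd[of a] ab bd_nonneg by auto
  have S0: "0 \<le> S" unfolding S_def by (rule sum_nonneg) simp
  have L2eq: "L2_set (\<lambda>k. w k * cmod (I k)) A = sqrt S" by (simp add: L2_set_def S_def)
  define h where "h \<sigma> = (\<Sum>k\<in>A. of_real ((w k)\<^sup>2) * cnj (I k) * g \<sigma> k)" for \<sigma>
  have hint: "integral {a..b} h = of_real S"
  proof -
    have "integral {a..b} h = (\<Sum>k\<in>A. integral {a..b} (\<lambda>\<sigma>. of_real ((w k)\<^sup>2) * cnj (I k) * g \<sigma> k))"
      unfolding h_def by (rule integral_sum[OF A]) (simp add: integrable_on_mult_right int mult.assoc)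
    also have "\<dots> = (\<Sum>k\<in>A. of_real ((w k)\<^sup>2) * cnj (I k) * I k)"
      by (simp add: I_def mult.assoc)
    also have "\<dots> = (\<Sum>k\<in>A. of_real ((w k * cmod (I k))\<^sup>2))"
    proof (rule sum.cong[OF refl])
      fix k
      have "cnj (I k) * I k = of_real ((cmod (I k))\<^sup>2)" by (metis complex_norm_square mult.commute)
      thus "of_real ((w k)\<^sup>2) * cnj (I k) * I k = of_real ((w k * cmod (I k))\<^sup>2)"
        by (simp add: mult.assoc power_mult_distrib)
    qed
    also have "\<dots> = of_real S" by (simp add: S_def)
    finally show ?thesis .
  qed
  have hb: "cmod (h \<sigma>) \<le> sqrt S * c" if \<sigma>: "\<sigma> \<in> {a..b}" for \<sigma>
  proof -
    have "cmod (h \<sigma>) \<le> (\<Sum>k\<in>A. cmod (of_real ((w k)\<^sup>2) * cnj (I k) * g \<sigma> k))"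
      unfolding h_def by (rule norm_sum)
    also have "\<dots> = (\<Sum>k\<in>A. \<bar>w k * cmod (I k)\<bar> * \<bar>w k * cmod (g \<sigma> k)\<bar>)"
      by (intro sum.cong refl) (simp add: norm_mult power2_eq_square abs_mult w_def)
    also have "\<dots> \<le> L2_set (\<lambda>k. w k * cmod (I k)) A * L2_set (\<lambda>k. w k * cmod (g \<sigma> k)) A"
      by (rule L2_set_mult_ineq)
    also have "\<dots> \<le> sqrt S * c"
      unfolding L2eq using bnd[OF \<sigma>] A S0 by (intro mult_left_mono) (auto simp: bd_def w_def)
    finally show ?thesis .
  qed
  have hI: "h integrable_on {a..b}"
    unfolding h_def by (intro integrable_sum A) (simp add: integrable_on_mult_right int mult.assoc)
  have hI': "(h has_integral integral {a..b} h) (cbox a b)" using hI by (simp add: cbox_interval integrable_integral)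
  have hb': "\<And>x. x \<in> cbox a b \<Longrightarrow> norm (h x) \<le> sqrt S * c" using hb by (simp add: cbox_interval)
  have "cmod (integral {a..b} h) \<le> sqrt S * c * (b - a)"
    using has_integral_bound[OF mult_nonneg_nonneg[OF real_sqrt_ge_zero[OF S0] c0] hI' hb'] ab
    by (simp add: cbox_interval content_real)
  hence SS: "S \<le> sqrt S * ((b - a) * c)" using hint S0 by (simp add: algebra_simps)
  have "sqrt S \<le> (b - a) * c"
  proof (cases "S = 0")
    case True thus ?thesis using c0 ab by simp
  next
    case False
    hence sp: "0 < sqrt S" using S0 by simp
    have H: "sqrt S * sqrt S \<le> sqrt S * ((b - a) * c)" using SS S0 by simp
    show ?thesis using mult_le_cancel_left_pos[OF sp, of "sqrt S" "(b - a) * c"] H by blast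
  qed
  thus "L2_set (\<lambda>k. knorm k powr s * cmod (integral {a..b} (\<lambda>\<sigma>. g \<sigma> k))) A \<le> (b - a) * c"
    using L2eq by (simp add: w_def I_def)
qed


lemma integral_norm_le:
  fixes h :: "real \<Rightarrow> complex"
  assumes ab: "a \<le> b" and hI: "h integrable_on {a..b}" and hb: "\<And>x. x \<in> {a..b} \<Longrightarrow> cmod (h x) \<le> B" and B: "0 \<le> B"
  shows "cmod (integral {a..b} h) \<le> B * (b - a)"
proof -
  have hI': "(h has_integral integral {a..b} h) (cbox a b)" using hI by (simp add: cbox_interval integrable_integral)
  have hb': "\<And>x. x \<in> cbox a b \<Longrightarrow> norm (h x) \<le> B" using hb by (simp add: cbox_interval)
  show ?thesis using has_integral_bound[OF B hI' hb'] ab by (simp add: cbox_interval content_real)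
qed

locale qg = fixes \<mu> s :: real assumes mu: "0 < \<mu>" and s1: "1 < s"
begin

lemma s0: "0 \<le> s" using s1 by simp

lemma Cb_ex: obtains Cb where "0 < Cb"
  "\<And>f g bf bg. f (0,0) = 0 \<Longrightarrow> g (0,0) = 0 \<Longrightarrow> bd s f bf \<Longrightarrow> bd s g bg \<Longrightarrow> bd s (FB \<mu> f g) (Cb * bf * bg)"
proof -
  obtain K where K: "0 < K" "\<And>f b. bd s f b \<Longrightarrow> f (0,0) = 0 \<Longrightarrow> l1 f (K * b)"
    by (rule l1_of_bd[OF s1]) (rule that)
  define Cb where "Cb = 2 * (2 * 2 powr s / \<mu>) * K"
  show ?thesis
  proof (rule that[of Cb])
    show "0 < Cb" using mu K(1) by (simp add: Cb_def)
    fix f g bf bg assume f0: "f (0,0) = 0" and g0: "g (0,0) = 0" and fb: "bd s f bf" and gb: "bd s g bg"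
    have "bd s (FB \<mu> f g) ((2 * 2 powr s / \<mu>) * ((K * bg) * bf + (K * bf) * bg))"
      by (rule FB_bd[OF mu s0 g0 fb gb K(2)[OF fb f0] K(2)[OF gb g0]])
    thus "bd s (FB \<mu> f g) (Cb * bf * bg)" by (simp add: Cb_def algebra_simps)
  qed
qed

definition Cb where "Cb = (SOME C. 0 < C \<and> (\<forall>f g bf bg. f (0,0) = 0 \<longrightarrow> g (0,0) = 0 \<longrightarrow> bd s f bf \<longrightarrow> bd s g bg \<longrightarrow> bd s (FB \<mu> f g) (C * bf * bg)))"

lemma Cb: "0 < Cb" "f (0,0) = 0 \<Longrightarrow> g (0,0) = 0 \<Longrightarrow> bd s f bf \<Longrightarrow> bd s g bg \<Longrightarrow> bd s (FB \<mu> f g) (Cb * bf * bg)"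
proof -
  have ex: "\<exists>C. 0 < C \<and> (\<forall>f g bf bg. f (0,0) = 0 \<longrightarrow> g (0,0) = 0 \<longrightarrow> bd s f bf \<longrightarrow> bd s g bg \<longrightarrow> bd s (FB \<mu> f g) (C * bf * bg))"
    using Cb_ex by metis
  show "0 < Cb" using someI_ex[OF ex] unfolding Cb_def by blast
  show "f (0,0) = 0 \<Longrightarrow> g (0,0) = 0 \<Longrightarrow> bd s f bf \<Longrightarrow> bd s g bg \<Longrightarrow> bd s (FB \<mu> f g) (Cb * bf * bg)"
    using someI_ex[OF ex] unfolding Cb_def by blast
qed

lemma l1K: obtains K where "0 < K" "\<And>f b. bd s f b \<Longrightarrow> f (0,0) = 0 \<Longrightarrow> l1 f (K * b)"
  by (rule l1_of_bd[OF s1]) (rule that)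

lemma FB_lip:
  assumes f0: "f (0,0) = 0" and g0: "g (0,0) = 0" and fb: "bd s f R1" and gb: "bd s g R2"
    and d: "bd s (\<lambda>k. f k - g k) d"
  shows "bd s (\<lambda>k. FB \<mu> f f k - FB \<mu> g g k) (Cb * (R1 + R2) * d)"
proof -
  obtain K where K: "0 < K" "\<And>f b. bd s f b \<Longrightarrow> f (0,0) = 0 \<Longrightarrow> l1 f (K * b)" by (rule l1K) (rule that)
  have eq: "FB \<mu> f f k - FB \<mu> g g k = FB \<mu> (\<lambda>j. f j - g j) f k + FB \<mu> g (\<lambda>j. f j - g j) k" for k
    by (rule FB_diff[OF K(2)[OF fb f0] K(2)[OF gb g0] bd_coeff0[OF fb s0 f0] bd_coeff0[OF gb s0 g0]])
  have h0: "(\<lambda>j. f j - g j) (0,0) = 0" using f0 g0 by simp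
  have "bd s (\<lambda>k. FB \<mu> (\<lambda>j. f j - g j) f k + FB \<mu> g (\<lambda>j. f j - g j) k) (Cb * d * R1 + Cb * R2 * d)"
    by (rule bd_add[OF Cb(2)[OF h0 f0 d fb] Cb(2)[OF g0 h0 gb d]])
  thus ?thesis by (rule bd_cong[OF bd_mono]) (auto simp: eq algebra_simps)
qed

lemma FB_path_cont:
  assumes z: "\<And>\<sigma>. \<sigma> \<in> {a..b} \<Longrightarrow> \<psi> \<sigma> (0,0) = 0" and B: "\<And>\<sigma>. \<sigma> \<in> {a..b} \<Longrightarrow> bd s (\<psi> \<sigma>) R"
    and L: "\<And>\<sigma> \<tau>. \<sigma> \<in> {a..b} \<Longrightarrow> \<tau> \<in> {a..b} \<Longrightarrow> bd s (\<lambda>k. \<psi> \<sigma> k - \<psi> \<tau> k) (\<bar>\<sigma> - \<tau>\<bar> * L)"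
  shows "continuous_on {a..b} (\<lambda>\<sigma>. FB \<mu> (\<psi> \<sigma>) (\<psi> \<sigma>) k)"
proof (rule lipschitz_on_continuous_on)
  show "lipschitz_on (Cb * (max R 0 + max R 0) * max L 0) {a..b} (\<lambda>\<sigma>. FB \<mu> (\<psi> \<sigma>) (\<psi> \<sigma>) k)"
    unfolding lipschitz_on_def
  proof (intro conjI ballI)
    show "0 \<le> Cb * (max R 0 + max R 0) * max L 0" using Cb(1) by simp
    fix \<sigma> \<tau> assume st: "\<sigma> \<in> {a..b}" "\<tau> \<in> {a..b}"
    have R0: "0 \<le> R" using B[OF st(1)] bd_nonneg by auto
    have "bd s (\<lambda>k. FB \<mu> (\<psi> \<sigma>) (\<psi> \<sigma>) k - FB \<mu> (\<psi> \<tau>) (\<psi> \<tau>) k) (Cb * (R + R) * (\<bar>\<sigma> - \<tau>\<bar> * L))"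
      by (rule FB_lip[OF z[OF st(1)] z[OF st(2)] B[OF st(1)] B[OF st(2)] L[OF st]])
    hence "cmod (FB \<mu> (\<psi> \<sigma>) (\<psi> \<sigma>) k - FB \<mu> (\<psi> \<tau>) (\<psi> \<tau>) k) \<le> Cb * (R + R) * (\<bar>\<sigma> - \<tau>\<bar> * L)"
      by (rule bd_coeff0[OF _ s0]) simp
    also have "\<dots> \<le> Cb * (R + R) * (\<bar>\<sigma> - \<tau>\<bar> * max L 0)"
      using Cb(1) R0 by (intro mult_left_mono) auto
    also have "\<dots> = Cb * (max R 0 + max R 0) * max L 0 * dist \<sigma> \<tau>"
      using R0 by (simp add: dist_real_def)
    finally show "dist (FB \<mu> (\<psi> \<sigma>) (\<psi> \<sigma>) k) (FB \<mu> (\<psi> \<tau>) (\<psi> \<tau>) k) \<le> Cb * (max R 0 + max R 0) * max L 0 * dist \<sigma> \<tau>"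
      by (simp add: dist_norm)
  qed
qed

end


context qg begin

lemma picard_step:
  assumes R: "0 < R" and f0h: "herm f0" and f00: "f0 (0,0) = 0" and f0b: "bd s f0 R"
    and dl: "\<delta> = 1 / (8 * Cb * R)"
    and Qz: "\<And>\<sigma>. \<sigma> \<in> {a..a+\<delta>} \<Longrightarrow> Q \<sigma> (0,0) = 0"
    and Qh: "\<And>\<sigma>. \<sigma> \<in> {a..a+\<delta>} \<Longrightarrow> herm (Q \<sigma>)"
    and Qb: "\<And>\<sigma>. \<sigma> \<in> {a..a+\<delta>} \<Longrightarrow> bd s (Q \<sigma>) (2 * R)"
    and QL: "\<And>\<sigma> \<tau>. \<sigma> \<in> {a..a+\<delta>} \<Longrightarrow> \<tau> \<in> {a..a+\<delta>} \<Longrightarrow> bd s (\<lambda>k. Q \<sigma> k - Q \<tau> k) (\<bar>\<sigma> - \<tau>\<bar> * L)"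
    and Q'def: "Q' = (\<lambda>t k. f0 k - integral {a..t} (\<lambda>\<sigma>. FB \<mu> (Q \<sigma>) (Q \<sigma>) k))"
  shows "\<And>t. t \<in> {a..a+\<delta>} \<Longrightarrow> herm (Q' t)"
    and "\<And>t. t \<in> {a..a+\<delta>} \<Longrightarrow> Q' t (0,0) = 0"
    and "\<And>t. t \<in> {a..a+\<delta>} \<Longrightarrow> bd s (Q' t) (2 * R)"
    and "\<And>t \<tau>. t \<in> {a..a+\<delta>} \<Longrightarrow> \<tau> \<in> {a..a+\<delta>} \<Longrightarrow> bd s (\<lambda>k. Q' t k - Q' \<tau> k) (\<bar>t - \<tau>\<bar> * (4 * Cb * R\<^sup>2))"
    and "Q' a = f0"
    and "\<And>t k. t \<in> {a..a+\<delta>} \<Longrightarrow> (\<lambda>\<sigma>. FB \<mu> (Q \<sigma>) (Q \<sigma>) k) integrable_on {a..t}"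
    and "\<And>t. t \<in> {a..a+\<delta>} \<Longrightarrow> bd s (\<lambda>k. Q' t k - f0 k) (R / 2)"
proof -
  have Cb0: "0 < Cb" by (rule Cb(1))
  have d0: "0 < \<delta>" using dl Cb0 R by simp
  have key: "\<delta> * (4 * Cb * R\<^sup>2) = R / 2" using dl Cb0 R by (simp add: field_simps power2_eq_square)
  have cont: "continuous_on {a..a+\<delta>} (\<lambda>\<sigma>. FB \<mu> (Q \<sigma>) (Q \<sigma>) k)" for k
    by (rule FB_path_cont[OF Qz Qb QL])
  have intg: "(\<lambda>\<sigma>. FB \<mu> (Q \<sigma>) (Q \<sigma>) k) integrable_on {c..d}" if "{c..d} \<subseteq> {a..a+\<delta>}" for k c d
    by (rule integrable_subinterval_real[OF integrable_continuous_interval[OF cont] that])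
  show "(\<lambda>\<sigma>. FB \<mu> (Q \<sigma>) (Q \<sigma>) k) integrable_on {a..t}" if "t \<in> {a..a+\<delta>}" for t k
    by (rule intg) (use that in auto)
  have FBb: "bd s (FB \<mu> (Q \<sigma>) (Q \<sigma>)) (4 * Cb * R\<^sup>2)" if "\<sigma> \<in> {a..a+\<delta>}" for \<sigma>
    using Cb(2)[OF Qz[OF that] Qz[OF that] Qb[OF that] Qb[OF that]] by (simp add: power2_eq_square algebra_simps)
  have Ib: "bd s (\<lambda>k. integral {c..d} (\<lambda>\<sigma>. FB \<mu> (Q \<sigma>) (Q \<sigma>) k)) ((d - c) * (4 * Cb * R\<^sup>2))"
    if "a \<le> c" "c \<le> d" "d \<le> a + \<delta>" for c d
    by (rule int_bd[OF that(2)]) (use that in \<open>auto intro!: intg FBb\<close>)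
  show bQ: "bd s (Q' t) (2 * R)" if t: "t \<in> {a..a+\<delta>}" for t
  proof -
    have i1: "bd s (\<lambda>k. integral {a..t} (\<lambda>\<sigma>. FB \<mu> (Q \<sigma>) (Q \<sigma>) k)) ((t - a) * (4 * Cb * R\<^sup>2))"
      by (rule Ib) (use t in auto)
    have i2: "(t - a) * (4 * Cb * R\<^sup>2) \<le> \<delta> * (4 * Cb * R\<^sup>2)"
      by (rule mult_right_mono) (use t Cb0 in auto)
    have "bd s (\<lambda>k. integral {a..t} (\<lambda>\<sigma>. FB \<mu> (Q \<sigma>) (Q \<sigma>) k)) (R / 2)"
      by (rule bd_mono[OF i1]) (use i2 key in linarith)
    from bd_diff[OF f0b this] have "bd s (Q' t) (R + R / 2)" unfolding Q'def .
    thus ?thesis by (rule bd_mono) (use R in simp)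
  qed
  show "bd s (\<lambda>k. Q' t k - f0 k) (R / 2)" if t: "t \<in> {a..a+\<delta>}" for t
  proof -
    have i1: "bd s (\<lambda>k. integral {a..t} (\<lambda>\<sigma>. FB \<mu> (Q \<sigma>) (Q \<sigma>) k)) ((t - a) * (4 * Cb * R\<^sup>2))"
      by (rule Ib) (use t in auto)
    have i2: "(t - a) * (4 * Cb * R\<^sup>2) \<le> \<delta> * (4 * Cb * R\<^sup>2)"
      by (rule mult_right_mono) (use t Cb0 in auto)
    have "bd s (\<lambda>k. integral {a..t} (\<lambda>\<sigma>. FB \<mu> (Q \<sigma>) (Q \<sigma>) k)) (R / 2)"
      by (rule bd_mono[OF i1]) (use i2 key in linarith)
    from bd_uminus[OF this] show ?thesis unfolding Q'def by simp
  qed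
  show "herm (Q' t)" if t: "t \<in> {a..a+\<delta>}" for t
    unfolding herm_def
  proof
    fix k :: "int \<times> int"
    have "integral {a..t} (\<lambda>\<sigma>. FB \<mu> (Q \<sigma>) (Q \<sigma>) (- fst k, - snd k))
        = integral {a..t} (\<lambda>\<sigma>. cnj (FB \<mu> (Q \<sigma>) (Q \<sigma>) k))"
    proof (rule integral_cong)
      fix \<sigma> assume "\<sigma> \<in> {a..t}"
      hence "herm (FB \<mu> (Q \<sigma>) (Q \<sigma>))" using t by (intro FB_herm Qh) auto
      thus "FB \<mu> (Q \<sigma>) (Q \<sigma>) (- fst k, - snd k) = cnj (FB \<mu> (Q \<sigma>) (Q \<sigma>) k)" unfolding herm_def by blast
    qed
    also have "\<dots> = cnj (integral {a..t} (\<lambda>\<sigma>. FB \<mu> (Q \<sigma>) (Q \<sigma>) k))" by (rule integral_cnj[symmetric])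
    finally show "Q' t (- fst k, - snd k) = cnj (Q' t k)"
      using f0h unfolding Q'def herm_def by simp
  qed
  show "Q' t (0,0) = 0" if "t \<in> {a..a+\<delta>}" for t
    unfolding Q'def using f00 by simp
  show "Q' a = f0" unfolding Q'def by simp
  show "bd s (\<lambda>k. Q' t k - Q' \<tau> k) (\<bar>t - \<tau>\<bar> * (4 * Cb * R\<^sup>2))"
    if t: "t \<in> {a..a+\<delta>}" and \<tau>: "\<tau> \<in> {a..a+\<delta>}" for t \<tau>
  proof -
    have gen: "bd s (\<lambda>k. Q' t k - Q' \<tau> k) ((t - \<tau>) * (4 * Cb * R\<^sup>2))"
      if t: "t \<in> {a..a+\<delta>}" and \<tau>: "\<tau> \<in> {a..a+\<delta>}" and le: "\<tau> \<le> t" for t \<tau>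
    proof -
      have eq: "Q' t k - Q' \<tau> k = - integral {\<tau>..t} (\<lambda>\<sigma>. FB \<mu> (Q \<sigma>) (Q \<sigma>) k)" for k
      proof -
        have "integral {a..\<tau>} (\<lambda>\<sigma>. FB \<mu> (Q \<sigma>) (Q \<sigma>) k) + integral {\<tau>..t} (\<lambda>\<sigma>. FB \<mu> (Q \<sigma>) (Q \<sigma>) k)
            = integral {a..t} (\<lambda>\<sigma>. FB \<mu> (Q \<sigma>) (Q \<sigma>) k)"
          by (rule Henstock_Kurzweil_Integration.integral_combine) (use t \<tau> le in \<open>auto intro!: intg\<close>)
        thus ?thesis unfolding Q'def by (simp add: algebra_simps)
      qed
      have "bd s (\<lambda>k. integral {\<tau>..t} (\<lambda>\<sigma>. FB \<mu> (Q \<sigma>) (Q \<sigma>) k)) ((t - \<tau>) * (4 * Cb * R\<^sup>2))"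
        by (rule Ib) (use t \<tau> le in auto)
      from bd_uminus[OF this] show ?thesis by (simp add: eq)
    qed
    show ?thesis
    proof (cases "\<tau> \<le> t")
      case True thus ?thesis using gen[OF t \<tau>] by simp
    next
      case False
      hence "bd s (\<lambda>k. Q' \<tau> k - Q' t k) ((\<tau> - t) * (4 * Cb * R\<^sup>2))" using gen[OF \<tau> t] by simp
      from bd_uminus[OF this] show ?thesis using False by (simp add: abs_if)
    qed
  qed
qed


lemma picard_contr:
  assumes R: "0 < R" and dl: "\<delta> = 1 / (8 * Cb * R)"
    and Qz: "\<And>\<sigma>. \<sigma> \<in> {a..a+\<delta>} \<Longrightarrow> Q1 \<sigma> (0,0) = 0" "\<And>\<sigma>. \<sigma> \<in> {a..a+\<delta>} \<Longrightarrow> Q2 \<sigma> (0,0) = 0"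
    and Qb: "\<And>\<sigma>. \<sigma> \<in> {a..a+\<delta>} \<Longrightarrow> bd s (Q1 \<sigma>) (2 * R)" "\<And>\<sigma>. \<sigma> \<in> {a..a+\<delta>} \<Longrightarrow> bd s (Q2 \<sigma>) (2 * R)"
    and QL: "\<And>\<sigma> \<tau>. \<sigma> \<in> {a..a+\<delta>} \<Longrightarrow> \<tau> \<in> {a..a+\<delta>} \<Longrightarrow> bd s (\<lambda>k. Q1 \<sigma> k - Q1 \<tau> k) (\<bar>\<sigma> - \<tau>\<bar> * L1)"
      "\<And>\<sigma> \<tau>. \<sigma> \<in> {a..a+\<delta>} \<Longrightarrow> \<tau> \<in> {a..a+\<delta>} \<Longrightarrow> bd s (\<lambda>k. Q2 \<sigma> k - Q2 \<tau> k) (\<bar>\<sigma> - \<tau>\<bar> * L2)"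
    and d: "\<And>\<sigma>. \<sigma> \<in> {a..a+\<delta>} \<Longrightarrow> bd s (\<lambda>k. Q1 \<sigma> k - Q2 \<sigma> k) d"
    and t: "t \<in> {a..a+\<delta>}"
  shows "bd s (\<lambda>k. (f0 k - integral {a..t} (\<lambda>\<sigma>. FB \<mu> (Q1 \<sigma>) (Q1 \<sigma>) k))
                   - (f0 k - integral {a..t} (\<lambda>\<sigma>. FB \<mu> (Q2 \<sigma>) (Q2 \<sigma>) k))) (d / 2)"
proof -
  have Cb0: "0 < Cb" by (rule Cb(1))
  have key: "\<delta> * (Cb * (2 * R + 2 * R)) = 1 / 2" using dl Cb0 R by (simp add: field_simps)
  have d0: "0 \<le> d" using d[of a] t bd_nonneg by auto
  have i1: "(\<lambda>\<sigma>. FB \<mu> (Q1 \<sigma>) (Q1 \<sigma>) k) integrable_on {a..t}" for k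
    by (rule integrable_subinterval_real[OF integrable_continuous_interval[OF FB_path_cont[OF Qz(1) Qb(1) QL(1)]]])
       (use t in auto)
  have i2: "(\<lambda>\<sigma>. FB \<mu> (Q2 \<sigma>) (Q2 \<sigma>) k) integrable_on {a..t}" for k
    by (rule integrable_subinterval_real[OF integrable_continuous_interval[OF FB_path_cont[OF Qz(2) Qb(2) QL(2)]]])
       (use t in auto)
  have eq: "(f0 k - integral {a..t} (\<lambda>\<sigma>. FB \<mu> (Q1 \<sigma>) (Q1 \<sigma>) k)) - (f0 k - integral {a..t} (\<lambda>\<sigma>. FB \<mu> (Q2 \<sigma>) (Q2 \<sigma>) k))
      = - integral {a..t} (\<lambda>\<sigma>. FB \<mu> (Q1 \<sigma>) (Q1 \<sigma>) k - FB \<mu> (Q2 \<sigma>) (Q2 \<sigma>) k)" for k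
    using integral_diff[OF i1 i2, of k] by simp
  have "bd s (\<lambda>k. integral {a..t} (\<lambda>\<sigma>. FB \<mu> (Q1 \<sigma>) (Q1 \<sigma>) k - FB \<mu> (Q2 \<sigma>) (Q2 \<sigma>) k)) ((t - a) * (Cb * (2 * R + 2 * R) * d))"
  proof (rule int_bd)
    show "a \<le> t" using t by simp
    show "(\<lambda>\<sigma>. FB \<mu> (Q1 \<sigma>) (Q1 \<sigma>) k - FB \<mu> (Q2 \<sigma>) (Q2 \<sigma>) k) integrable_on {a..t}" for k
      by (rule integrable_diff[OF i1 i2])
    show "bd s (\<lambda>k. FB \<mu> (Q1 \<sigma>) (Q1 \<sigma>) k - FB \<mu> (Q2 \<sigma>) (Q2 \<sigma>) k) (Cb * (2 * R + 2 * R) * d)"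
      if "\<sigma> \<in> {a..t}" for \<sigma>
    proof -
      have \<sigma>: "\<sigma> \<in> {a..a+\<delta>}" using that t by auto
      show ?thesis by (rule FB_lip[OF Qz(1)[OF \<sigma>] Qz(2)[OF \<sigma>] Qb(1)[OF \<sigma>] Qb(2)[OF \<sigma>] d[OF \<sigma>]])
    qed
  qed
  hence b1: "bd s (\<lambda>k. integral {a..t} (\<lambda>\<sigma>. FB \<mu> (Q1 \<sigma>) (Q1 \<sigma>) k - FB \<mu> (Q2 \<sigma>) (Q2 \<sigma>) k)) (d / 2)"
  proof (rule bd_mono)
    have "(t - a) * (Cb * (2 * R + 2 * R) * d) \<le> \<delta> * (Cb * (2 * R + 2 * R) * d)"
      by (rule mult_right_mono) (use t Cb0 R d0 in auto)
    also have "\<dots> = d / 2" using key by (simp add: algebra_simps)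
    finally show "(t - a) * (Cb * (2 * R + 2 * R) * d) \<le> d / 2" .
  qed
  from bd_uminus[OF b1] show ?thesis by (simp add: eq)
qed

end


context qg begin

lemma local_exist:
  assumes R: "0 < R" and f0h: "herm f0" and f00: "f0 (0,0) = 0" and f0b: "bd s f0 R"
    and dl: "\<delta> = 1 / (8 * Cb * R)"
  obtains \<psi> where "\<psi> a = f0"
    "\<And>t. t \<in> {a..a+\<delta>} \<Longrightarrow> herm (\<psi> t) \<and> \<psi> t (0,0) = 0 \<and> bd s (\<psi> t) (2 * R)"
    "\<And>t \<tau>. t \<in> {a..a+\<delta>} \<Longrightarrow> \<tau> \<in> {a..a+\<delta>} \<Longrightarrow> bd s (\<lambda>k. \<psi> t k - \<psi> \<tau> k) (\<bar>t - \<tau>\<bar> * (4 * Cb * R\<^sup>2))"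
    "\<And>t k. t \<in> {a..a+\<delta>} \<Longrightarrow> \<psi> t k = f0 k - integral {a..t} (\<lambda>\<sigma>. FB \<mu> (\<psi> \<sigma>) (\<psi> \<sigma>) k)"
    "\<And>t k. t \<in> {a..a+\<delta>} \<Longrightarrow> (\<lambda>\<sigma>. FB \<mu> (\<psi> \<sigma>) (\<psi> \<sigma>) k) integrable_on {a..t}"
proof -
  define J where "J = {a..a+\<delta>}"
  define L where "L = 4 * Cb * R\<^sup>2"
  have Cb0: "0 < Cb" by (rule Cb(1))
  have L0: "0 \<le> L" using Cb0 by (simp add: L_def)
  define P where "P = rec_nat (\<lambda>t. f0) (\<lambda>n Q t k. f0 k - integral {a..t} (\<lambda>\<sigma>. FB \<mu> (Q \<sigma>) (Q \<sigma>) k))"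
  have P0: "P 0 = (\<lambda>t. f0)" by (simp add: P_def)
  have PS: "P (Suc n) = (\<lambda>t k. f0 k - integral {a..t} (\<lambda>\<sigma>. FB \<mu> (P n \<sigma>) (P n \<sigma>) k))" for n
    by (simp add: P_def)
  define Inv where "Inv Q \<longleftrightarrow> (\<forall>\<sigma>\<in>J. herm (Q \<sigma>) \<and> Q \<sigma> (0,0) = 0 \<and> bd s (Q \<sigma>) (2 * R)) \<and>
     (\<forall>\<sigma>\<in>J. \<forall>\<tau>\<in>J. bd s (\<lambda>k. Q \<sigma> k - Q \<tau> k) (\<bar>\<sigma> - \<tau>\<bar> * L))" for Q
  have InvD: "\<And>\<sigma>. \<sigma> \<in> {a..a+\<delta>} \<Longrightarrow> Q \<sigma> (0,0) = 0"
      "\<And>\<sigma>. \<sigma> \<in> {a..a+\<delta>} \<Longrightarrow> herm (Q \<sigma>)"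
      "\<And>\<sigma>. \<sigma> \<in> {a..a+\<delta>} \<Longrightarrow> bd s (Q \<sigma>) (2 * R)"
      "\<And>\<sigma> \<tau>. \<sigma> \<in> {a..a+\<delta>} \<Longrightarrow> \<tau> \<in> {a..a+\<delta>} \<Longrightarrow> bd s (\<lambda>k. Q \<sigma> k - Q \<tau> k) (\<bar>\<sigma> - \<tau>\<bar> * L)"
    if "Inv Q" for Q using that by (auto simp: Inv_def J_def)
  have step: "Inv (\<lambda>t k. f0 k - integral {a..t} (\<lambda>\<sigma>. FB \<mu> (Q \<sigma>) (Q \<sigma>) k))"
    and stepa: "(\<lambda>t k. f0 k - integral {a..t} (\<lambda>\<sigma>. FB \<mu> (Q \<sigma>) (Q \<sigma>) k)) a = f0"
    and stepb: "\<And>t. t \<in> J \<Longrightarrow> bd s (\<lambda>k. (f0 k - integral {a..t} (\<lambda>\<sigma>. FB \<mu> (Q \<sigma>) (Q \<sigma>) k)) - f0 k) (R / 2)"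
    if I: "Inv Q" for Q
  proof -
    note ps = picard_step[OF R f0h f00 f0b dl InvD(1)[OF I] InvD(2)[OF I] InvD(3)[OF I] InvD(4)[OF I] refl]
    show "Inv (\<lambda>t k. f0 k - integral {a..t} (\<lambda>\<sigma>. FB \<mu> (Q \<sigma>) (Q \<sigma>) k))"
      unfolding Inv_def J_def L_def using ps(1-4) by blast
    show "(\<lambda>t k. f0 k - integral {a..t} (\<lambda>\<sigma>. FB \<mu> (Q \<sigma>) (Q \<sigma>) k)) a = f0" using ps(5) .
    show "\<And>t. t \<in> J \<Longrightarrow> bd s (\<lambda>k. (f0 k - integral {a..t} (\<lambda>\<sigma>. FB \<mu> (Q \<sigma>) (Q \<sigma>) k)) - f0 k) (R / 2)"
      using ps(7) unfolding J_def by blast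
  qed
  have PInv: "Inv (P n)" for n
  proof (induction n)
    case 0
    have "bd s f0 (2 * R)" by (rule bd_mono[OF f0b]) (use R in simp)
    moreover have "bd s (\<lambda>k. f0 k - f0 k) (\<bar>\<sigma> - \<tau>\<bar> * L)" for \<sigma> \<tau>
      by (rule bd_mono[OF bd_cong[OF bd_zero]]) (use L0 in auto)
    ultimately show ?case unfolding Inv_def P0 using f0h f00 by auto
  next
    case (Suc n) thus ?case unfolding PS by (rule step)
  qed
  have Pa: "P n a = f0" for n
    by (cases n) (simp_all add: P0 stepa[OF PInv, unfolded PS[symmetric]] PS)
  have D: "\<forall>t\<in>J. bd s (\<lambda>k. P (Suc n) t k - P n t k) (R * (1/2)^n)" for n
  proof (induction n)
    case 0
    show ?case
    proof
      fix t assume t: "t \<in> J"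
      have "bd s (\<lambda>k. P (Suc 0) t k - P 0 t k) (R / 2)" using stepb[OF PInv[of 0] t] unfolding PS P0 by simp
      thus "bd s (\<lambda>k. P (Suc 0) t k - P 0 t k) (R * (1/2)^0)" by (rule bd_mono) (use R in simp)
    qed
  next
    case (Suc n)
    show ?case
    proof
      fix t assume t: "t \<in> J"
      have I1: "Inv (P (Suc n))" and I2: "Inv (P n)" by (rule PInv)+
      have "bd s (\<lambda>k. (f0 k - integral {a..t} (\<lambda>\<sigma>. FB \<mu> (P (Suc n) \<sigma>) (P (Suc n) \<sigma>) k))
                   - (f0 k - integral {a..t} (\<lambda>\<sigma>. FB \<mu> (P n \<sigma>) (P n \<sigma>) k))) (R * (1/2)^n / 2)"
        by (rule picard_contr[OF R dl InvD(1)[OF I1] InvD(1)[OF I2] InvD(3)[OF I1] InvD(3)[OF I2]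
                 InvD(4)[OF I1] InvD(4)[OF I2]]) (use Suc t in \<open>auto simp: J_def\<close>)
      thus "bd s (\<lambda>k. P (Suc (Suc n)) t k - P (Suc n) t k) (R * (1/2)^Suc n)"
        unfolding PS[of "Suc n"] PS[of n, symmetric] by (simp add: PS)
    qed
  qed
  have C: "\<forall>t\<in>J. bd s (\<lambda>k. P m t k - P n t k) (2 * R * ((1/2)^n - (1/2)^m))" if "n \<le> m" for m n
    using that
  proof (induction m rule: dec_induct)
    case base
    show ?case by (auto intro: bd_cong[OF bd_zero])
  next
    case (step m)
    show ?case
    proof
      fix t assume t: "t \<in> J"
      have "bd s (\<lambda>k. (P (Suc m) t k - P m t k) + (P m t k - P n t k)) (R * (1/2)^m + 2 * R * ((1/2)^n - (1/2)^m))"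
        by (rule bd_add) (use D step.IH t in auto)
      thus "bd s (\<lambda>k. P (Suc m) t k - P n t k) (2 * R * ((1/2)^n - (1/2)^Suc m))"
        by (rule bd_cong[OF bd_mono]) (auto simp: algebra_simps)
    qed
  qed
  have Cc: "cmod (P m t k - P n t k) \<le> 2 * R * (1/2)^n" if "n \<le> m" "t \<in> J" for m n t k
  proof -
    have z: "(\<lambda>k. P m t k - P n t k) (0,0) = 0" using PInv[of m] PInv[of n] that(2) by (simp add: Inv_def)
    have "cmod (P m t k - P n t k) \<le> 2 * R * ((1/2)^n - (1/2)^m)"
      using bd_coeff0[OF C[OF that(1), rule_format, OF that(2)] s0 z] by simp
    also have "\<dots> \<le> 2 * R * (1/2)^n" using R by simp
    finally show ?thesis .
  qed
  have conv: "convergent (\<lambda>n. P n t k)" if t: "t \<in> J" for t k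
  proof -
    have "Cauchy (\<lambda>n. P n t k)"
    proof (rule CauchyI)
      fix e :: real assume e: "0 < e"
      obtain M where M: "(1/2::real)^M < e / (2 * R)" using real_arch_pow_inv[of "e / (2 * R)" "1/2"] e R by auto
      show "\<exists>M. \<forall>m\<ge>M. \<forall>n\<ge>M. cmod (P m t k - P n t k) < e"
      proof (intro exI allI impI)
        fix m n assume mn: "M \<le> m" "M \<le> n"
        have pw: "(1/2::real)^i \<le> (1/2)^M" if "M \<le> i" for i by (rule power_decreasing[OF that]) auto
        have "cmod (P m t k - P n t k) \<le> 2 * R * (1/2)^M"
        proof (cases "n \<le> m")
          case True thus ?thesis using Cc[OF True t, of k] pw[OF mn(2)] R by (smt (verit) mult_left_mono)
        next
          case False
          hence "cmod (P n t k - P m t k) \<le> 2 * R * (1/2)^m" using Cc[of m n t k] t by simp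
          hence a: "cmod (P m t k - P n t k) \<le> 2 * R * (1/2)^m" by (simp add: norm_minus_commute)
          have "2 * R * (1/2::real)^m \<le> 2 * R * (1/2)^M" using pw[OF mn(1)] R by simp
          thus ?thesis using a by linarith
        qed
        also have "\<dots> < e" using M R by (simp add: field_simps)
        finally show "cmod (P m t k - P n t k) < e" .
      qed
    qed
    thus ?thesis by (simp add: Cauchy_convergent_iff)
  qed
  define \<psi> where "\<psi> t k = lim (\<lambda>n. P n t k)" for t k
  have lim: "(\<lambda>n. P n t k) \<longlonglongrightarrow> \<psi> t k" if "t \<in> J" for t k
    using conv[OF that] unfolding \<psi>_def convergent_LIMSEQ_iff .
  have ta: "a \<in> J" using dl Cb0 R by (simp add: J_def)
  show ?thesis
  proof (rule that)
    show "\<psi> a = f0"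
    proof
      fix k
      have "(\<lambda>n. P n a k) \<longlonglongrightarrow> f0 k" by (simp add: Pa)
      thus "\<psi> a k = f0 k" using lim[OF ta] LIMSEQ_unique by blast
    qed
    have \<psi>z: "\<psi> t (0,0) = 0" if t: "t \<in> J" for t
    proof -
      have "(\<lambda>n. P n t (0,0)) \<longlonglongrightarrow> 0" using PInv t by (simp add: Inv_def)
      thus ?thesis using lim[OF t] LIMSEQ_unique by blast
    qed
    have \<psi>h: "herm (\<psi> t)" if t: "t \<in> J" for t
      unfolding herm_def
    proof
      fix k :: "int \<times> int"
      have "(\<lambda>n. P n t (- fst k, - snd k)) = (\<lambda>n. cnj (P n t k))" using PInv t by (simp add: Inv_def herm_def)
      hence "(\<lambda>n. P n t (- fst k, - snd k)) \<longlonglongrightarrow> cnj (\<psi> t k)" using tendsto_cnj[OF lim[OF t]] by simp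
      thus "\<psi> t (- fst k, - snd k) = cnj (\<psi> t k)" using lim[OF t] LIMSEQ_unique by blast
    qed
    have \<psi>b: "bd s (\<psi> t) (2 * R)" if t: "t \<in> J" for t
      by (rule bd_limit[OF lim[OF t]]) (use PInv t in \<open>auto simp: Inv_def\<close>)
    show "herm (\<psi> t) \<and> \<psi> t (0,0) = 0 \<and> bd s (\<psi> t) (2 * R)" if "t \<in> {a..a+\<delta>}" for t
      using \<psi>h \<psi>z \<psi>b that unfolding J_def by blast
    have \<psi>L: "bd s (\<lambda>k. \<psi> t k - \<psi> \<tau> k) (\<bar>t - \<tau>\<bar> * L)" if t: "t \<in> J" and \<tau>: "\<tau> \<in> J" for t \<tau>
      by (rule bd_limit[where x="\<lambda>n k. P n t k - P n \<tau> k"])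
         (use PInv t \<tau> in \<open>auto simp: Inv_def intro!: tendsto_diff lim\<close>)
    show "bd s (\<lambda>k. \<psi> t k - \<psi> \<tau> k) (\<bar>t - \<tau>\<bar> * (4 * Cb * R\<^sup>2))" if "t \<in> {a..a+\<delta>}" "\<tau> \<in> {a..a+\<delta>}" for t \<tau>
      using \<psi>L that unfolding J_def L_def by blast
    have \<psi>n: "bd s (\<lambda>k. P n t k - \<psi> t k) (2 * R * (1/2)^n)" if t: "t \<in> J" for n t
    proof -
      have "bd s (\<lambda>k. \<psi> t k - P n t k) (2 * R * (1/2)^n)"
      proof (rule bd_limit[where x="\<lambda>m k. P m t k - P n t k"])
        show "(\<lambda>m. P m t k - P n t k) \<longlonglongrightarrow> \<psi> t k - P n t k" for k by (intro tendsto_diff lim[OF t] tendsto_const)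
        show "\<forall>\<^sub>F m in sequentially. bd s (\<lambda>k. P m t k - P n t k) (2 * R * (1/2)^n)"
          using eventually_ge_at_top[of n]
        proof eventually_elim
          case (elim m)
          show ?case by (rule bd_mono[OF C[OF elim, rule_format, OF t]]) (use R in simp)
        qed
      qed
      from bd_uminus[OF this] show ?thesis by simp
    qed
    have cont\<psi>: "continuous_on {a..a+\<delta>} (\<lambda>\<sigma>. FB \<mu> (\<psi> \<sigma>) (\<psi> \<sigma>) k)" for k
      by (rule FB_path_cont[where R="2 * R" and L=L]) (use \<psi>z \<psi>b \<psi>L in \<open>auto simp: J_def\<close>)
    have int\<psi>: "(\<lambda>\<sigma>. FB \<mu> (\<psi> \<sigma>) (\<psi> \<sigma>) k) integrable_on {a..t}" if "t \<in> {a..a+\<delta>}" for t k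
      by (rule integrable_subinterval_real[OF integrable_continuous_interval[OF cont\<psi>]]) (use that in auto)
    show "(\<lambda>\<sigma>. FB \<mu> (\<psi> \<sigma>) (\<psi> \<sigma>) k) integrable_on {a..t}" if "t \<in> {a..a+\<delta>}" for t k
      using int\<psi> that .
    show "\<psi> t k = f0 k - integral {a..t} (\<lambda>\<sigma>. FB \<mu> (\<psi> \<sigma>) (\<psi> \<sigma>) k)" if t': "t \<in> {a..a+\<delta>}" for t k
    proof -
      have t: "t \<in> J" using t' by (simp add: J_def)
      have intP: "(\<lambda>\<sigma>. FB \<mu> (P n \<sigma>) (P n \<sigma>) k) integrable_on {a..t}" for n
        by (rule integrable_subinterval_real[OF integrable_continuous_interval[OF FB_path_cont[OF InvD(1)[OF PInv[of n]] InvD(3)[OF PInv[of n]] InvD(4)[OF PInv[of n]]]]])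
           (use t' in auto)
      define A where "A n = integral {a..t} (\<lambda>\<sigma>. FB \<mu> (P n \<sigma>) (P n \<sigma>) k)" for n
      define B where "B = integral {a..t} (\<lambda>\<sigma>. FB \<mu> (\<psi> \<sigma>) (\<psi> \<sigma>) k)"
      have bnd: "cmod (A n - B) \<le> (Cb * (2 * R + 2 * R) * (2 * R * (1/2)^n)) * (t - a)" for n
      proof -
        have "A n - B = integral {a..t} (\<lambda>\<sigma>. FB \<mu> (P n \<sigma>) (P n \<sigma>) k - FB \<mu> (\<psi> \<sigma>) (\<psi> \<sigma>) k)"
          unfolding A_def B_def by (rule integral_diff[OF intP int\<psi>[OF t'], symmetric])
        also have "cmod \<dots> \<le> (Cb * (2 * R + 2 * R) * (2 * R * (1/2)^n)) * (t - a)"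
        proof (rule integral_norm_le)
          show "a \<le> t" using t' by simp
          show "(\<lambda>\<sigma>. FB \<mu> (P n \<sigma>) (P n \<sigma>) k - FB \<mu> (\<psi> \<sigma>) (\<psi> \<sigma>) k) integrable_on {a..t}"
            by (rule integrable_diff[OF intP int\<psi>[OF t']])
          show "0 \<le> Cb * (2 * R + 2 * R) * (2 * R * (1/2)^n)" using Cb0 R by simp
          fix \<sigma> assume "\<sigma> \<in> {a..t}"
          hence \<sigma>: "\<sigma> \<in> J" using t by (auto simp: J_def)
          have "bd s (\<lambda>k. FB \<mu> (P n \<sigma>) (P n \<sigma>) k - FB \<mu> (\<psi> \<sigma>) (\<psi> \<sigma>) k) (Cb * (2 * R + 2 * R) * (2 * R * (1/2)^n))"
            by (rule FB_lip[OF _ \<psi>z[OF \<sigma>] _ \<psi>b[OF \<sigma>] \<psi>n[OF \<sigma>]]) (use PInv \<sigma> in \<open>auto simp: Inv_def\<close>)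
          thus "cmod (FB \<mu> (P n \<sigma>) (P n \<sigma>) k - FB \<mu> (\<psi> \<sigma>) (\<psi> \<sigma>) k) \<le> Cb * (2 * R + 2 * R) * (2 * R * (1/2)^n)"
            by (rule bd_coeff0[OF _ s0]) simp
        qed
        finally show ?thesis .
      qed
      have g0: "(\<lambda>n. (Cb * (2 * R + 2 * R) * (2 * R * (1/2)^n)) * (t - a)) \<longlonglongrightarrow> 0"
      proof -
        have "(\<lambda>n. (1/2::real)^n) \<longlonglongrightarrow> 0" by (rule LIMSEQ_power_zero) simp
        hence "(\<lambda>n. (Cb * (2 * R + 2 * R) * (2 * R)) * (t - a) * (1/2::real)^n) \<longlonglongrightarrow> (Cb * (2 * R + 2 * R) * (2 * R)) * (t - a) * 0"
          by (intro tendsto_mult tendsto_const)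
        thus ?thesis by (simp add: algebra_simps)
      qed
      have AB: "A \<longlonglongrightarrow> B"
        by (rule LIM_zero_cancel, rule Lim_null_comparison[OF always_eventually g0]) (use bnd in auto)
      have "(\<lambda>n. P (Suc n) t k) \<longlonglongrightarrow> f0 k - B"
        unfolding PS A_def[symmetric] by (intro tendsto_diff tendsto_const AB)
      moreover have "(\<lambda>n. P (Suc n) t k) \<longlonglongrightarrow> \<psi> t k" by (rule LIMSEQ_Suc[OF lim[OF t]])
      ultimately show ?thesis unfolding B_def using LIMSEQ_unique by blast
    qed
  qed
qed

end


lemma crossing:
  fixes X Y Y' \<Phi> :: "real \<Rightarrow> real"
  assumes ab: "a \<le> b"
    and Xc: "continuous_on {a..b} X"
    and loc: "\<And>\<tau> t c. a \<le> \<tau> \<Longrightarrow> \<tau> \<le> t \<Longrightarrow> t \<le> b \<Longrightarrow> (\<forall>\<sigma>\<in>{\<tau>..t}. X \<sigma> \<le> c) \<Longrightarrow> X t \<le> X \<tau> + (t - \<tau>) * \<Phi> c"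
    and Yd: "\<And>t. (Y has_real_derivative Y' t) (at t)"
    and Yg: "\<And>t. t \<in> {a..b} \<Longrightarrow> \<Phi> (Y t) < Y' t"
    and Ym: "\<And>x y. a \<le> x \<Longrightarrow> x \<le> y \<Longrightarrow> Y x \<le> Y y"
    and X0: "X a < Y a"
  shows "\<And>t. t \<in> {a..b} \<Longrightarrow> X t \<le> Y t"
proof (rule ccontr)
  fix t2 assume t2: "t2 \<in> {a..b}" and nle: "\<not> X t2 \<le> Y t2"
  define W where "W t = X t - Y t" for t
  have Yc: "continuous_on S Y" for S by (rule DERIV_continuous_on) (rule DERIV_subset[OF Yd], simp)
  have Wc: "continuous_on {a..t2} W" unfolding W_def
    by (intro continuous_on_diff continuous_on_subset[OF Xc] Yc) (use t2 in auto)
  define S where "S = {t \<in> {a..t2}. W t = 0}"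
  have W0: "W a < 0" using X0 by (simp add: W_def)
  have W2: "0 < W t2" using nle by (simp add: W_def)
  have Sne: "S \<noteq> {}"
  proof -
    obtain x where "a \<le> x" "x \<le> t2" "W x = 0" using IVT'[of W a 0 t2] W0 W2 t2 Wc by auto
    thus ?thesis unfolding S_def by auto
  qed
  have Scl: "closed S" unfolding S_def by (rule continuous_closed_preimage_constant[OF Wc]) simp
  have Sbd: "bdd_below S" unfolding S_def by (rule bdd_belowI[of _ a]) auto
  define t0 where "t0 = Inf S"
  have t0S: "t0 \<in> S" unfolding t0_def by (rule closed_contains_Inf[OF Sne Sbd Scl])
  hence t0r: "a \<le> t0" "t0 \<le> t2" "W t0 = 0" by (auto simp: S_def)
  have t0a: "a < t0" using t0r W0 by (cases "a = t0") auto
  have below: "W \<sigma> < 0" if \<sigma>a: "a \<le> \<sigma>" and \<sigma>t: "\<sigma> < t0" for \<sigma>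
  proof (rule ccontr)
    assume "\<not> W \<sigma> < 0"
    hence W\<sigma>: "0 \<le> W \<sigma>" by simp
    have \<sigma>2: "\<sigma> \<le> t2" using \<sigma>t t0r by simp
    have cs: "continuous_on {a..\<sigma>} W" by (rule continuous_on_subset[OF Wc]) (use \<sigma>2 in auto)
    have W0': "W a \<le> 0" using W0 by simp
    obtain x where x: "a \<le> x" "x \<le> \<sigma>" "W x = 0"
      using IVT'[of W a 0 \<sigma>, OF W0' W\<sigma> \<sigma>a cs] by auto
    hence "x \<in> S" using \<sigma>2 by (auto simp: S_def)
    hence "t0 \<le> x" unfolding t0_def by (rule cInf_lower[OF _ Sbd])
    thus False using x \<sigma>t by simp
  qed
  have XY0: "X t0 = Y t0" using t0r by (simp add: W_def)
  have quot: "(Y t0 - Y \<tau>) / (t0 - \<tau>) < \<Phi> (Y t0)" if "a \<le> \<tau>" "\<tau> < t0" for \<tau>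
  proof -
    have bnd: "\<forall>\<sigma>\<in>{\<tau>..t0}. X \<sigma> \<le> Y t0"
    proof
      fix \<sigma> assume \<sigma>: "\<sigma> \<in> {\<tau>..t0}"
      show "X \<sigma> \<le> Y t0"
      proof (cases "\<sigma> = t0")
        case True thus ?thesis using XY0 by simp
      next
        case False
        hence "W \<sigma> < 0" using below[of \<sigma>] \<sigma> that by auto
        hence "X \<sigma> < Y \<sigma>" by (simp add: W_def)
        moreover have "Y \<sigma> \<le> Y t0" using Ym[of \<sigma> t0] \<sigma> that by auto
        ultimately show ?thesis by simp
      qed
    qed
    have "X t0 \<le> X \<tau> + (t0 - \<tau>) * \<Phi> (Y t0)" by (rule loc[OF that(1) _ _ bnd]) (use that t0r t2 in auto)
    moreover have "X \<tau> < Y \<tau>" using below[OF that] by (simp add: W_def)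
    ultimately have "Y t0 - Y \<tau> < (t0 - \<tau>) * \<Phi> (Y t0)" using XY0 by linarith
    thus ?thesis using that by (simp add: divide_simps mult.commute)
  qed
  have "((\<lambda>y. (Y y - Y t0) / (y - t0)) \<longlongrightarrow> Y' t0) (at t0)"
    using Yd[of t0] by (simp add: has_field_derivative_iff)
  moreover have "\<Phi> (Y t0) < Y' t0" using Yg t0r t2 by auto
  ultimately have "\<forall>\<^sub>F y in at t0. \<Phi> (Y t0) < (Y y - Y t0) / (y - t0)" by (rule order_tendstoD)
  then obtain d where d: "0 < d" "\<And>y. y \<noteq> t0 \<and> dist y t0 < d \<Longrightarrow> \<Phi> (Y t0) < (Y y - Y t0) / (y - t0)"
    unfolding eventually_at by auto
  define \<tau> where "\<tau> = max a (t0 - d / 2)"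
  have \<tau>: "a \<le> \<tau>" "\<tau> < t0" "dist \<tau> t0 < d" using t0a d(1) by (auto simp: \<tau>_def dist_real_def)
  have "\<Phi> (Y t0) < (Y \<tau> - Y t0) / (\<tau> - t0)" using d(2)[of \<tau>] \<tau> by auto
  also have "(Y \<tau> - Y t0) / (\<tau> - t0) = (Y t0 - Y \<tau>) / (t0 - \<tau>)" by (simp add: divide_simps) (simp add: algebra_simps)
  finally show False using quot[OF \<tau>(1,2)] by simp
qed


context qg begin

lemma apriori:
  fixes M x0 H :: real
  assumes M0: "0 \<le> M" and x00: "0 \<le> x0" and H0: "0 \<le> H"
  obtains K where "\<And>(a::real) b \<phi> B t. a \<le> b \<Longrightarrow> b - a \<le> H \<Longrightarrow>
     (\<And>t. t \<in> {a..b} \<Longrightarrow> \<phi> t (0,0) = 0 \<and> bd 1 (\<phi> t) M \<and> bd s (\<phi> t) B) \<Longrightarrow>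
     (\<And>\<tau> t k. a \<le> \<tau> \<Longrightarrow> \<tau> \<le> t \<Longrightarrow> t \<le> b \<Longrightarrow>
        (\<lambda>\<sigma>. FB \<mu> (\<phi> \<sigma>) (\<phi> \<sigma>) k) integrable_on {\<tau>..t} \<and>
        \<phi> t k - \<phi> \<tau> k = - integral {\<tau>..t} (\<lambda>\<sigma>. FB \<mu> (\<phi> \<sigma>) (\<phi> \<sigma>) k)) \<Longrightarrow>
     Hnorm s (\<phi> a) \<le> x0 \<Longrightarrow> t \<in> {a..b} \<Longrightarrow> Hnorm s (\<phi> t) \<le> K"
proof -
  obtain c0 c1 where c: "0 < c0" "0 < c1"
    "\<And>f M b. f (0,0) = 0 \<Longrightarrow> bd 1 f M \<Longrightarrow> bd s f b \<Longrightarrow> l1 f ((1 + M) * (c0 + c1 * ln (1 + b)))"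
    by (rule l1_BG[OF s1]) (rule that)
  define A where "A = (2 * 2 powr s / \<mu>) * 2 * (1 + M)"
  have A0: "0 < A" using mu M0 by (simp add: A_def)
  define \<Phi> where "\<Phi> c = A * c * (c0 + c1 * ln (1 + c))" for c
  have FB\<Phi>: "bd s (FB \<mu> f f) (\<Phi> b)" if "f (0,0) = 0" "bd 1 f M" "bd s f b" for f b
  proof -
    have l: "l1 f ((1 + M) * (c0 + c1 * ln (1 + b)))" by (rule c(3)[OF that])
    have "bd s (FB \<mu> f f) ((2 * 2 powr s / \<mu>) * ((1 + M) * (c0 + c1 * ln (1 + b)) * b + (1 + M) * (c0 + c1 * ln (1 + b)) * b))"
      by (rule FB_bd[OF mu s0 that(1) that(3) that(3) l l])
    moreover have "(2 * 2 powr s / \<mu>) * ((1 + M) * (c0 + c1 * ln (1 + b)) * b + (1 + M) * (c0 + c1 * ln (1 + b)) * b) = \<Phi> b"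
      using mu by (simp add: \<Phi>_def A_def field_simps)
    ultimately show ?thesis by simp
  qed
  define Z0 where "Z0 = ln (2 + x0)"
  have Z00: "0 < Z0" using x00 by (simp add: Z0_def)
  define \<kappa> where "\<kappa> = c0 / c1"
  have \<kappa>0: "0 < \<kappa>" using c by (simp add: \<kappa>_def)
  define K where "K = exp ((Z0 + \<kappa>) * exp (2 * A * c1 * H) - \<kappa>) - 1"
  show ?thesis
  proof (rule that[of K])
    fix a b \<phi> B t
    assume ab: "a \<le> b" and bH: "b - a \<le> H"
      and P: "\<And>t. t \<in> {a..b} \<Longrightarrow> \<phi> t (0,0) = 0 \<and> bd 1 (\<phi> t) M \<and> bd s (\<phi> t) B"
      and E: "\<And>\<tau> t k. a \<le> \<tau> \<Longrightarrow> \<tau> \<le> t \<Longrightarrow> t \<le> b \<Longrightarrow>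
        (\<lambda>\<sigma>. FB \<mu> (\<phi> \<sigma>) (\<phi> \<sigma>) k) integrable_on {\<tau>..t} \<and>
        \<phi> t k - \<phi> \<tau> k = - integral {\<tau>..t} (\<lambda>\<sigma>. FB \<mu> (\<phi> \<sigma>) (\<phi> \<sigma>) k)"
      and Xa: "Hnorm s (\<phi> a) \<le> x0" and t: "t \<in> {a..b}"
    define X where "X t = Hnorm s (\<phi> t)" for t
    have "bd s (\<phi> a) B" using P[of a] ab by auto
    hence B0: "0 \<le> B" by (rule bd_nonneg)
    have bdX: "bd s (\<phi> t) (X t)" if "t \<in> {a..b}" for t
      unfolding X_def by (rule bd_of_summable[OF bd_summable(1)]) (use P that in blast)
    have Xle: "X t \<le> c" if "bd s (\<phi> t) c" for t c unfolding X_def by (rule bd_summable(2)[OF that])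
    have dif: "bd s (\<lambda>k. \<phi> t k - \<phi> \<tau> k) ((t - \<tau>) * \<Phi> c)"
      if "a \<le> \<tau>" "\<tau> \<le> t" "t \<le> b" "\<And>\<sigma>. \<sigma> \<in> {\<tau>..t} \<Longrightarrow> bd s (\<phi> \<sigma>) c" for \<tau> t c
    proof -
      have "bd s (\<lambda>k. integral {\<tau>..t} (\<lambda>\<sigma>. FB \<mu> (\<phi> \<sigma>) (\<phi> \<sigma>) k)) ((t - \<tau>) * \<Phi> c)"
      proof (rule int_bd[OF that(2)])
        show "(\<lambda>\<sigma>. FB \<mu> (\<phi> \<sigma>) (\<phi> \<sigma>) k) integrable_on {\<tau>..t}" for k using E[OF that(1-3)] by blast
        fix \<sigma> assume \<sigma>: "\<sigma> \<in> {\<tau>..t}"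
        hence \<sigma>': "\<sigma> \<in> {a..b}" using that by auto
        show "bd s (FB \<mu> (\<phi> \<sigma>) (\<phi> \<sigma>)) (\<Phi> c)" by (rule FB\<Phi>) (use P[OF \<sigma>'] that(4)[OF \<sigma>] in auto)
      qed
      from bd_uminus[OF this] show ?thesis using E[OF that(1-3)] by simp
    qed
    have loc: "X t \<le> X \<tau> + (t - \<tau>) * \<Phi> c"
      if "a \<le> \<tau>" "\<tau> \<le> t" "t \<le> b" "\<forall>\<sigma>\<in>{\<tau>..t}. X \<sigma> \<le> c" for \<tau> t c
    proof -
      have bc: "bd s (\<phi> \<sigma>) c" if "\<sigma> \<in> {\<tau>..t}" for \<sigma>
        by (rule bd_mono[OF bdX]) (use that \<open>a \<le> \<tau>\<close> \<open>t \<le> b\<close> \<open>\<forall>\<sigma>\<in>{\<tau>..t}. X \<sigma> \<le> c\<close> in auto)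
      have "bd s (\<lambda>k. \<phi> \<tau> k + (\<phi> t k - \<phi> \<tau> k)) (X \<tau> + (t - \<tau>) * \<Phi> c)"
        by (rule bd_add[OF bdX dif[OF that(1-3) bc]]) (use that in auto)
      hence "bd s (\<phi> t) (X \<tau> + (t - \<tau>) * \<Phi> c)" by (rule bd_cong) simp
      thus ?thesis by (rule Xle)
    qed
    have Xc: "continuous_on {a..b} X"
    proof (rule lipschitz_on_continuous_on)
      have \<Phi>B: "0 \<le> \<Phi> B" using A0 B0 c by (simp add: \<Phi>_def)
      show "lipschitz_on (\<Phi> B) {a..b} X" unfolding lipschitz_on_def
      proof (intro conjI ballI \<Phi>B)
        fix x y assume x: "x \<in> {a..b}" and y: "y \<in> {a..b}"
        have gen: "\<bar>X u - X v\<bar> \<le> \<Phi> B * (u - v)" if "v \<le> u" "u \<in> {a..b}" "v \<in> {a..b}" for u v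
        proof -
          have d: "bd s (\<lambda>k. \<phi> u k - \<phi> v k) ((u - v) * \<Phi> B)"
            by (rule dif) (use that P in auto)
          have "bd s (\<lambda>k. \<phi> v k + (\<phi> u k - \<phi> v k)) (X v + (u - v) * \<Phi> B)" by (rule bd_add[OF bdX[OF that(3)] d])
          hence "X u \<le> X v + (u - v) * \<Phi> B" by (intro Xle) (simp add: bd_cong)
          moreover have "bd s (\<lambda>k. \<phi> u k - (\<phi> u k - \<phi> v k)) (X u + (u - v) * \<Phi> B)" by (rule bd_diff[OF bdX[OF that(2)] d])
          hence "X v \<le> X u + (u - v) * \<Phi> B" by (intro Xle) (simp add: bd_cong)
          ultimately show ?thesis by (simp add: algebra_simps abs_le_iff)
        qed
        show "dist (X x) (X y) \<le> \<Phi> B * dist x y"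
        proof (cases "y \<le> x")
          case True thus ?thesis using gen[OF True x y] by (simp add: dist_real_def)
        next
          case False thus ?thesis using gen[of x y] x y by (simp add: dist_real_def abs_minus_commute)
        qed
      qed
    qed
    define Z where "Z u = (Z0 + \<kappa>) * exp (2 * A * c1 * (u - a)) - \<kappa>" for u
    define Y where "Y u = exp (Z u) - 1" for u
    define Y' where "Y' u = exp (Z u) * ((Z0 + \<kappa>) * (exp (2 * A * c1 * (u - a)) * (2 * A * c1)))" for u
    have Yd: "(Y has_real_derivative Y' u) (at u)" for u
      unfolding Y_def Y'_def Z_def by (auto intro!: derivative_eq_intros)
    have Zge: "Z0 \<le> Z u" if "a \<le> u" for u
    proof -
      have "1 \<le> exp (2 * A * c1 * (u - a))" using that A0 c by simp
      hence "(Z0 + \<kappa>) * 1 \<le> (Z0 + \<kappa>) * exp (2 * A * c1 * (u - a))" using Z00 \<kappa>0 by (intro mult_left_mono) auto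
      thus ?thesis by (simp add: Z_def)
    qed
    have Yg: "\<Phi> (Y u) < Y' u" if "u \<in> {a..b}" for u
    proof -
      have z: "0 < Z u" using Zge[of u] that Z00 by auto
      have ln: "ln (1 + Y u) = Z u" by (simp add: Y_def)
      have Y'eq: "Y' u = 2 * A * exp (Z u) * (c0 + c1 * Z u)"
        using c by (simp add: Y'_def Z_def \<kappa>_def field_simps)
      have pos: "0 < c0 + c1 * Z u" using c z by (simp add: add_pos_nonneg)
      have "\<Phi> (Y u) = A * (exp (Z u) - 1) * (c0 + c1 * Z u)" by (simp add: \<Phi>_def ln Y_def)
      also have "\<dots> < 2 * A * exp (Z u) * (c0 + c1 * Z u)"
      proof (rule mult_strict_right_mono[OF _ pos])
        have "0 < A * exp (Z u)" using A0 by simp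
        hence "0 < A + A * exp (Z u)" using A0 by linarith
        thus "A * (exp (Z u) - 1) < 2 * A * exp (Z u)" by (simp add: algebra_simps)
      qed
      finally show ?thesis using Y'eq by simp
    qed
    have Ym: "Y x \<le> Y y" if "a \<le> x" "x \<le> y" for x y
    proof -
      have "exp (2 * A * c1 * (x - a)) \<le> exp (2 * A * c1 * (y - a))" using that A0 c by (simp add: mult_left_mono)
      hence "Z x \<le> Z y" using Z00 \<kappa>0 by (simp add: Z_def mult_left_mono)
      thus ?thesis by (simp add: Y_def)
    qed
    have X0: "X a < Y a" using Xa x00 by (simp add: X_def Y_def Z_def Z0_def)
    have "X t \<le> Y t" by (rule crossing[OF ab Xc loc Yd Yg Ym X0 t])
    also have "Y t \<le> Y (a + H)" using Ym[of t "a + H"] t bH by auto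
    also have "Y (a + H) = K" by (simp add: Y_def Z_def K_def)
    finally show "Hnorm s (\<phi> t) \<le> K" by (simp add: X_def)
  qed
qed

end


lemma sol_restrict: "rQG_solution a m s \<theta>0 T2 \<phi> \<Longrightarrow> T1 \<le> T2 \<Longrightarrow> rQG_solution a m s \<theta>0 T1 \<phi>"
  unfolding rQG_solution_def by (meson atLeastAtMost_iff order_trans)

lemma inH_of_bd: "herm f \<Longrightarrow> f (0,0) = 0 \<Longrightarrow> bd s f c \<Longrightarrow> in_H s f"
  unfolding in_H_def herm_def using bd_summable(1) by blast

lemma inH_herm: "in_H s f \<Longrightarrow> herm f" unfolding in_H_def herm_def by blast
lemma inH_zero: "in_H s f \<Longrightarrow> f (0,0) = 0" unfolding in_H_def by blast

context qg begin

lemma sol_iff: "rQG_solution (1/2) \<mu> s \<theta>0 T' \<phi> \<longleftrightarrow>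
   (\<exists>B. \<forall>t\<in>{0..T'}. in_H s (\<phi> t) \<and> Hnorm s (\<phi> t) \<le> B) \<and>
   (\<forall>t\<in>{0..T'}. \<forall>k. (\<lambda>\<tau>. FB \<mu> (\<phi> \<tau>) (\<phi> \<tau>) k) integrable_on {0..t} \<and>
        \<phi> t k = \<theta>0 k - integral {0..t} (\<lambda>\<tau>. FB \<mu> (\<phi> \<tau>) (\<phi> \<tau>) k))"
  unfolding rQG_solution_def integrand_eq ..

lemma sol_diff:
  assumes sol: "rQG_solution (1/2) \<mu> s \<theta>0 T' \<phi>" and le: "0 \<le> \<tau>" "\<tau> \<le> t" "t \<le> T'"
  shows "(\<lambda>\<sigma>. FB \<mu> (\<phi> \<sigma>) (\<phi> \<sigma>) k) integrable_on {\<tau>..t} \<and>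
         \<phi> t k - \<phi> \<tau> k = - integral {\<tau>..t} (\<lambda>\<sigma>. FB \<mu> (\<phi> \<sigma>) (\<phi> \<sigma>) k)"
proof -
  have S: "\<forall>t\<in>{0..T'}. \<forall>k. (\<lambda>\<tau>. FB \<mu> (\<phi> \<tau>) (\<phi> \<tau>) k) integrable_on {0..t} \<and>
        \<phi> t k = \<theta>0 k - integral {0..t} (\<lambda>\<tau>. FB \<mu> (\<phi> \<tau>) (\<phi> \<tau>) k)" using sol unfolding sol_iff by blast
  have tt: "t \<in> {0..T'}" and \<tau>t: "\<tau> \<in> {0..T'}" using le by auto
  have it: "(\<lambda>\<sigma>. FB \<mu> (\<phi> \<sigma>) (\<phi> \<sigma>) k) integrable_on {0..t}" and et: "\<phi> t k = \<theta>0 k - integral {0..t} (\<lambda>\<sigma>. FB \<mu> (\<phi> \<sigma>) (\<phi> \<sigma>) k)"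
    using S[rule_format, OF tt, of k] by blast+
  have e\<tau>: "\<phi> \<tau> k = \<theta>0 k - integral {0..\<tau>} (\<lambda>\<sigma>. FB \<mu> (\<phi> \<sigma>) (\<phi> \<sigma>) k)" using S[rule_format, OF \<tau>t, of k] by blast
  have c: "integral {0..\<tau>} (\<lambda>\<sigma>. FB \<mu> (\<phi> \<sigma>) (\<phi> \<sigma>) k) + integral {\<tau>..t} (\<lambda>\<sigma>. FB \<mu> (\<phi> \<sigma>) (\<phi> \<sigma>) k)
      = integral {0..t} (\<lambda>\<sigma>. FB \<mu> (\<phi> \<sigma>) (\<phi> \<sigma>) k)"
    by (rule Henstock_Kurzweil_Integration.integral_combine[OF le(1,2) it])
  show ?thesis
  proof
    show "(\<lambda>\<sigma>. FB \<mu> (\<phi> \<sigma>) (\<phi> \<sigma>) k) integrable_on {\<tau>..t}"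
      by (rule integrable_subinterval_real[OF it]) (use le in auto)
    show "\<phi> t k - \<phi> \<tau> k = - integral {\<tau>..t} (\<lambda>\<sigma>. FB \<mu> (\<phi> \<sigma>) (\<phi> \<sigma>) k)"
      unfolding et e\<tau> c[symmetric] by simp
  qed
qed

lemma glue:
  assumes sol: "rQG_solution (1/2) \<mu> s \<theta>0 T' \<phi>" and T'0: "0 \<le> T'" and d0: "0 < \<delta>"
    and \<psi>a: "\<psi> T' = \<phi> T'"
    and \<psi>p: "\<And>t. t \<in> {T'..T'+\<delta>} \<Longrightarrow> herm (\<psi> t) \<and> \<psi> t (0,0) = 0 \<and> bd s (\<psi> t) R"
    and \<psi>e: "\<And>t k. t \<in> {T'..T'+\<delta>} \<Longrightarrow> \<psi> t k = \<phi> T' k - integral {T'..t} (\<lambda>\<sigma>. FB \<mu> (\<psi> \<sigma>) (\<psi> \<sigma>) k)"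
    and \<psi>i: "\<And>t k. t \<in> {T'..T'+\<delta>} \<Longrightarrow> (\<lambda>\<sigma>. FB \<mu> (\<psi> \<sigma>) (\<psi> \<sigma>) k) integrable_on {T'..t}"
  shows "rQG_solution (1/2) \<mu> s \<theta>0 (T' + \<delta>) (\<lambda>t. if t \<le> T' then \<phi> t else \<psi> t)"
proof -
  define \<phi>' where "\<phi>' t = (if t \<le> T' then \<phi> t else \<psi> t)" for t
  obtain B where B: "\<forall>t\<in>{0..T'}. in_H s (\<phi> t) \<and> Hnorm s (\<phi> t) \<le> B" using sol unfolding sol_iff by blast
  have S: "\<forall>t\<in>{0..T'}. \<forall>k. (\<lambda>\<tau>. FB \<mu> (\<phi> \<tau>) (\<phi> \<tau>) k) integrable_on {0..t} \<and>
        \<phi> t k = \<theta>0 k - integral {0..t} (\<lambda>\<tau>. FB \<mu> (\<phi> \<tau>) (\<phi> \<tau>) k)" using sol unfolding sol_iff by blast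
  have eq1: "\<phi>' \<sigma> = \<phi> \<sigma>" if "\<sigma> \<le> T'" for \<sigma> using that by (simp add: \<phi>'_def)
  have eq2: "\<phi>' \<sigma> = \<psi> \<sigma>" if "T' \<le> \<sigma>" for \<sigma> using that \<psi>a by (cases "\<sigma> = T'") (auto simp: \<phi>'_def)
  have part1: "\<exists>B. \<forall>t\<in>{0..T' + \<delta>}. in_H s (\<phi>' t) \<and> Hnorm s (\<phi>' t) \<le> B"
  proof (intro exI ballI)
    fix t assume t: "t \<in> {0..T' + \<delta>}"
    show "in_H s (\<phi>' t) \<and> Hnorm s (\<phi>' t) \<le> max B R"
    proof (cases "t \<le> T'")
      case True
      hence tt: "t \<in> {0..T'}" using t by auto
      have "in_H s (\<phi> t)" "Hnorm s (\<phi> t) \<le> B" using B tt by auto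
      thus ?thesis using True by (simp add: \<phi>'_def le_max_iff_disj)
    next
      case False
      hence t': "t \<in> {T'..T'+\<delta>}" using t by auto
      have h: "herm (\<psi> t)" and z: "\<psi> t (0,0) = 0" and bdp: "bd s (\<psi> t) R" using \<psi>p[OF t'] by auto
      have "in_H s (\<psi> t)" by (rule inH_of_bd[OF h z bdp])
      moreover have "Hnorm s (\<psi> t) \<le> R" by (rule bd_summable(2)[OF bdp])
      ultimately show ?thesis using False by (simp add: \<phi>'_def le_max_iff_disj)
    qed
  qed
  have part2: "(\<lambda>\<tau>. FB \<mu> (\<phi>' \<tau>) (\<phi>' \<tau>) k) integrable_on {0..t} \<and>
        \<phi>' t k = \<theta>0 k - integral {0..t} (\<lambda>\<tau>. FB \<mu> (\<phi>' \<tau>) (\<phi>' \<tau>) k)" if t: "t \<in> {0..T' + \<delta>}" for t k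
  proof (cases "t \<le> T'")
    case True
    have cg: "FB \<mu> (\<phi>' \<sigma>) (\<phi>' \<sigma>) k = FB \<mu> (\<phi> \<sigma>) (\<phi> \<sigma>) k" if "\<sigma> \<in> {0..t}" for \<sigma>
    proof -
      have "\<sigma> \<le> T'" using that True by auto
      thus ?thesis by (simp add: eq1)
    qed
    have tt: "t \<in> {0..T'}" using t True by auto
    note Sk = S[rule_format, OF tt, of k]
    have "(\<lambda>\<tau>. FB \<mu> (\<phi>' \<tau>) (\<phi>' \<tau>) k) integrable_on {0..t}"
      by (rule iffD2[OF Henstock_Kurzweil_Integration.integrable_cong[OF cg] conjunct1[OF Sk]])
    moreover have "\<phi>' t k = \<theta>0 k - integral {0..t} (\<lambda>\<tau>. FB \<mu> (\<phi>' \<tau>) (\<phi>' \<tau>) k)"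
    proof -
      have ic: "integral {0..t} (\<lambda>\<tau>. FB \<mu> (\<phi>' \<tau>) (\<phi>' \<tau>) k) = integral {0..t} (\<lambda>\<tau>. FB \<mu> (\<phi> \<tau>) (\<phi> \<tau>) k)"
        by (rule integral_cong[OF cg])
      show ?thesis unfolding ic eq1[OF True] by (rule conjunct2[OF Sk])
    qed
    ultimately show ?thesis ..
  next
    case False
    have T'T': "T' \<in> {0..T'}" using T'0 by auto
    have i0: "(\<lambda>\<tau>. FB \<mu> (\<phi> \<tau>) (\<phi> \<tau>) k) integrable_on {0..T'}" and e0: "\<phi> T' k = \<theta>0 k - integral {0..T'} (\<lambda>\<tau>. FB \<mu> (\<phi> \<tau>) (\<phi> \<tau>) k)"
      using S[rule_format, OF T'T', of k] by blast+
    have t': "t \<in> {T'..T'+\<delta>}" using t False by auto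
    have cg1: "FB \<mu> (\<phi>' \<sigma>) (\<phi>' \<sigma>) k = FB \<mu> (\<phi> \<sigma>) (\<phi> \<sigma>) k" if "\<sigma> \<in> {0..T'}" for \<sigma>
    proof -
      have "\<sigma> \<le> T'" using that by auto
      thus ?thesis by (simp add: eq1)
    qed
    have cg2: "FB \<mu> (\<phi>' \<sigma>) (\<phi>' \<sigma>) k = FB \<mu> (\<psi> \<sigma>) (\<psi> \<sigma>) k" if "\<sigma> \<in> {T'..t}" for \<sigma>
    proof -
      have "T' \<le> \<sigma>" using that by auto
      thus ?thesis by (simp add: eq2)
    qed
    have i1: "(\<lambda>\<tau>. FB \<mu> (\<phi>' \<tau>) (\<phi>' \<tau>) k) integrable_on {0..T'}"
      by (rule iffD2[OF Henstock_Kurzweil_Integration.integrable_cong[OF cg1] i0])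
    have i2: "(\<lambda>\<tau>. FB \<mu> (\<phi>' \<tau>) (\<phi>' \<tau>) k) integrable_on {T'..t}"
      by (rule iffD2[OF Henstock_Kurzweil_Integration.integrable_cong[OF cg2] \<psi>i[OF t']])
    have ic1: "integral {0..T'} (\<lambda>\<tau>. FB \<mu> (\<phi>' \<tau>) (\<phi>' \<tau>) k) = integral {0..T'} (\<lambda>\<tau>. FB \<mu> (\<phi> \<tau>) (\<phi> \<tau>) k)"
      by (rule integral_cong[OF cg1])
    have ic2: "integral {T'..t} (\<lambda>\<tau>. FB \<mu> (\<phi>' \<tau>) (\<phi>' \<tau>) k) = integral {T'..t} (\<lambda>\<tau>. FB \<mu> (\<psi> \<tau>) (\<psi> \<tau>) k)"
      by (rule integral_cong[OF cg2])
    have le: "T' \<le> t" using False by simp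
    have iall: "(\<lambda>\<tau>. FB \<mu> (\<phi>' \<tau>) (\<phi>' \<tau>) k) integrable_on {0..t}"
      by (rule Henstock_Kurzweil_Integration.integrable_combine[OF T'0 le i1 i2])
    have c: "integral {0..T'} (\<lambda>\<tau>. FB \<mu> (\<phi>' \<tau>) (\<phi>' \<tau>) k) + integral {T'..t} (\<lambda>\<tau>. FB \<mu> (\<phi>' \<tau>) (\<phi>' \<tau>) k)
        = integral {0..t} (\<lambda>\<tau>. FB \<mu> (\<phi>' \<tau>) (\<phi>' \<tau>) k)"
      by (rule Henstock_Kurzweil_Integration.integral_combine[OF T'0 le iall])
    have "\<phi>' t k = \<psi> t k" using False by (simp add: \<phi>'_def)
    also have "\<dots> = \<phi> T' k - integral {T'..t} (\<lambda>\<sigma>. FB \<mu> (\<psi> \<sigma>) (\<psi> \<sigma>) k)" by (rule \<psi>e[OF t'])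
    also have "\<dots> = \<theta>0 k - integral {0..t} (\<lambda>\<tau>. FB \<mu> (\<phi>' \<tau>) (\<phi>' \<tau>) k)"
      unfolding e0 c[symmetric] ic1 ic2 by simp
    finally show ?thesis using iall by simp
  qed
  have fe: "(\<lambda>t. if t \<le> T' then \<phi> t else \<psi> t) = \<phi>'" by (rule ext) (simp add: \<phi>'_def)
  show ?thesis unfolding fe sol_iff by (intro conjI part1 ballI allI part2)
qed

end


theorem theorem3p5:
  fixes \<mu> s T T1 :: real and \<theta>0 :: "int \<times> int \<Rightarrow> complex"
    and \<theta> :: "real \<Rightarrow> int \<times> int \<Rightarrow> complex"
  assumes "\<mu> > 0" and "s > 1" and "in_H s \<theta>0" and "T > 0"
    and "rQG_solution (1/2) \<mu> s \<theta>0 T \<theta>"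
    and "T < T1"
    and "\<exists>M. \<forall>T'\<in>{T..<T1}. \<forall>\<phi>.
           (rQG_solution (1/2) \<mu> s \<theta>0 T' \<phi> \<and> (\<forall>t\<in>{0..T}. \<phi> t = \<theta> t))
           \<longrightarrow> (\<forall>t\<in>{0..T'}. Hnorm 1 (\<phi> t) \<le> M)"
  shows "\<exists>\<phi>. rQG_solution (1/2) \<mu> s \<theta>0 T1 \<phi> \<and> (\<forall>t\<in>{0..T}. \<phi> t = \<theta> t)"
proof -
  interpret qg \<mu> s by unfold_locales (use assms(1,2) in auto)
  obtain M where M: "\<forall>T'\<in>{T..<T1}. \<forall>\<phi>.
           (rQG_solution (1/2) \<mu> s \<theta>0 T' \<phi> \<and> (\<forall>t\<in>{0..T}. \<phi> t = \<theta> t))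
           \<longrightarrow> (\<forall>t\<in>{0..T'}. Hnorm 1 (\<phi> t) \<le> M)" using assms(7) by blast
  define M' where "M' = max M 0"
  have M'0: "0 \<le> M'" by (simp add: M'_def)
  define x0 where "x0 = Hnorm s (\<theta> T)"
  have x00: "0 \<le> x0" unfolding x0_def Hnorm_def by (simp add: infsum_nonneg)
  define H where "H = T1 - T"
  have H0: "0 \<le> H" using assms(6) by (simp add: H_def)
  obtain K0 where K0: "\<And>(a::real) b \<phi> B t. a \<le> b \<Longrightarrow> b - a \<le> H \<Longrightarrow>
     (\<And>t. t \<in> {a..b} \<Longrightarrow> \<phi> t (0,0) = 0 \<and> bd 1 (\<phi> t) M' \<and> bd s (\<phi> t) B) \<Longrightarrow>
     (\<And>\<tau> t k. a \<le> \<tau> \<Longrightarrow> \<tau> \<le> t \<Longrightarrow> t \<le> b \<Longrightarrow>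
        (\<lambda>\<sigma>. FB \<mu> (\<phi> \<sigma>) (\<phi> \<sigma>) k) integrable_on {\<tau>..t} \<and>
        \<phi> t k - \<phi> \<tau> k = - integral {\<tau>..t} (\<lambda>\<sigma>. FB \<mu> (\<phi> \<sigma>) (\<phi> \<sigma>) k)) \<Longrightarrow>
     Hnorm s (\<phi> a) \<le> x0 \<Longrightarrow> t \<in> {a..b} \<Longrightarrow> Hnorm s (\<phi> t) \<le> K0"
    by (rule apriori[OF M'0 x00 H0]) (erule that)
  define K where "K = max K0 1"
  have Kp: "0 < K" by (simp add: K_def)
  define \<delta> where "\<delta> = 1 / (8 * Cb * K)"
  have \<delta>0: "0 < \<delta>" using Cb(1) Kp by (simp add: \<delta>_def)
  have bnd: "Hnorm s (\<phi> T') \<le> K"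
    if T': "T \<le> T'" "T' < T1" and sol: "rQG_solution (1/2) \<mu> s \<theta>0 T' \<phi>" and ag: "\<forall>t\<in>{0..T}. \<phi> t = \<theta> t" for T' \<phi>
  proof -
    obtain B where B: "\<forall>t\<in>{0..T'}. in_H s (\<phi> t) \<and> Hnorm s (\<phi> t) \<le> B" using sol unfolding sol_iff by blast
    have HM: "\<forall>t\<in>{0..T'}. Hnorm 1 (\<phi> t) \<le> M" using M T' sol ag by auto
    have "Hnorm s (\<phi> T') \<le> K0"
    proof (rule K0[of T T' \<phi> B T'])
      show "T \<le> T'" by (rule T'(1))
      show "T' - T \<le> H" using T' by (simp add: H_def)
      show "T' \<in> {T..T'}" using T' by simp
      show "Hnorm s (\<phi> T) \<le> x0" using ag assms(4) by (simp add: x0_def)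
      fix t assume t: "t \<in> {T..T'}"
      hence t0: "t \<in> {0..T'}" using assms(4) by auto
      have iH: "in_H s (\<phi> t)" and hb: "Hnorm s (\<phi> t) \<le> B" using B t0 by auto
      have "bd 1 (\<phi> t) (Hnorm 1 (\<phi> t))" by (rule inH_bd1[OF iH]) (use assms(2) in simp)
      moreover have "Hnorm 1 (\<phi> t) \<le> M" using HM t0 by blast
      ultimately have b1: "bd 1 (\<phi> t) M'" using bd_mono by (metis M'_def max.coboundedI1)
      have bs: "bd s (\<phi> t) B" by (rule bd_mono[OF inH_bd[OF iH] hb])
      show "\<phi> t (0,0) = 0 \<and> bd 1 (\<phi> t) M' \<and> bd s (\<phi> t) B" using inH_zero[OF iH] b1 bs by blast
    next
      fix \<tau> t k assume "T \<le> \<tau>" "\<tau> \<le> t" "t \<le> T'"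
      thus "(\<lambda>\<sigma>. FB \<mu> (\<phi> \<sigma>) (\<phi> \<sigma>) k) integrable_on {\<tau>..t} \<and>
        \<phi> t k - \<phi> \<tau> k = - integral {\<tau>..t} (\<lambda>\<sigma>. FB \<mu> (\<phi> \<sigma>) (\<phi> \<sigma>) k)"
        using sol_diff[OF sol, of \<tau> t k] assms(4) by auto
    qed
    thus ?thesis by (simp add: K_def)
  qed
  have claim: "\<exists>\<phi>. rQG_solution (1/2) \<mu> s \<theta>0 (min (T + real n * \<delta>) T1) \<phi> \<and> (\<forall>t\<in>{0..T}. \<phi> t = \<theta> t)" for n
  proof (induction n)
    case 0
    show ?case using assms(5,6) by (intro exI[of _ \<theta>]) simp
  next
    case (Suc n)
    then obtain \<phi> where sol: "rQG_solution (1/2) \<mu> s \<theta>0 (min (T + real n * \<delta>) T1) \<phi>"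
      and ag: "\<forall>t\<in>{0..T}. \<phi> t = \<theta> t" by blast
    show ?case
    proof (cases "T1 \<le> T + real n * \<delta>")
      case True
      hence "min (T + real (Suc n) * \<delta>) T1 = T1" "min (T + real n * \<delta>) T1 = T1" using \<delta>0 by (auto simp: algebra_simps)
      thus ?thesis using sol ag by auto
    next
      case False
      define T' where "T' = T + real n * \<delta>"
      have T'eq: "min (T + real n * \<delta>) T1 = T'" using False by (simp add: T'_def)
      have solT': "rQG_solution (1/2) \<mu> s \<theta>0 T' \<phi>" using sol T'eq by simp
      have TT': "T \<le> T'" using \<delta>0 by (simp add: T'_def)
      have T'1: "T' < T1" using False by (simp add: T'_def)
      have T'0: "0 \<le> T'" using TT' assms(4) by simp
      have hK: "Hnorm s (\<phi> T') \<le> K" by (rule bnd[OF TT' T'1 solT' ag])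
      obtain B where B: "\<forall>t\<in>{0..T'}. in_H s (\<phi> t) \<and> Hnorm s (\<phi> t) \<le> B" using solT' unfolding sol_iff by blast
      have iH: "in_H s (\<phi> T')" using B T'0 by auto
      have f0b: "bd s (\<phi> T') K" by (rule bd_mono[OF inH_bd[OF iH] hK])
      obtain \<psi> where \<psi>: "\<psi> T' = \<phi> T'"
        "\<And>t. t \<in> {T'..T'+\<delta>} \<Longrightarrow> herm (\<psi> t) \<and> \<psi> t (0,0) = 0 \<and> bd s (\<psi> t) (2 * K)"
        "\<And>t \<tau>. t \<in> {T'..T'+\<delta>} \<Longrightarrow> \<tau> \<in> {T'..T'+\<delta>} \<Longrightarrow> bd s (\<lambda>k. \<psi> t k - \<psi> \<tau> k) (\<bar>t - \<tau>\<bar> * (4 * Cb * K\<^sup>2))"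
        "\<And>t k. t \<in> {T'..T'+\<delta>} \<Longrightarrow> \<psi> t k = \<phi> T' k - integral {T'..t} (\<lambda>\<sigma>. FB \<mu> (\<psi> \<sigma>) (\<psi> \<sigma>) k)"
        "\<And>t k. t \<in> {T'..T'+\<delta>} \<Longrightarrow> (\<lambda>\<sigma>. FB \<mu> (\<psi> \<sigma>) (\<psi> \<sigma>) k) integrable_on {T'..t}"
        by (rule local_exist[OF Kp inH_herm[OF iH] inH_zero[OF iH] f0b \<delta>_def, of T']) (rule that)
      have sol2: "rQG_solution (1/2) \<mu> s \<theta>0 (T' + \<delta>) (\<lambda>t. if t \<le> T' then \<phi> t else \<psi> t)"
        by (rule glue[OF solT' T'0 \<delta>0 \<psi>(1,2,4,5)])
      have "rQG_solution (1/2) \<mu> s \<theta>0 (min (T + real (Suc n) * \<delta>) T1) (\<lambda>t. if t \<le> T' then \<phi> t else \<psi> t)"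
        by (rule sol_restrict[OF sol2]) (simp add: T'_def algebra_simps)
      moreover have "\<forall>t\<in>{0..T}. (\<lambda>t. if t \<le> T' then \<phi> t else \<psi> t) t = \<theta> t" using ag TT' by auto
      ultimately show ?thesis by blast
    qed
  qed
  obtain n where n: "(T1 - T) / \<delta> < real n" using reals_Archimedean2 by blast
  have "T1 \<le> T + real n * \<delta>" using n \<delta>0 by (simp add: field_simps)
  hence "min (T + real n * \<delta>) T1 = T1" by simp
  thus ?thesis using claim[of n] by simp
qed


end
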